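(* Let $R$ be a commutative ring, $S\subseteq R$ a subset, and $\eta:R\to S^{(-1)}R$ the canonical map. Then: (i) $\eta$ is an epimorphism in the category of commutative rings; (ii) the induced map $\eta^*:\mathrm{Spec}(S^{(-1)}R)\to\mathrm{Spec}(R)$, $\mathfrak q\mapsto\eta^{-1}(\mathfrak q)$, is bijective; (iii) for each $s\in S$, the set $(\eta^* )^{-1}(V(s))$ is both open and closed in $\mathrm{Spec}(S^{(-1)}R)$ with respect to the Zariski topology, and also with respect to the flat topology; (iv) $S^{(-1)}R$ is a nonzero ring if and only if $R$ is; (v) $\ker(\eta)$ is contained in the nilradical of $R$.
   Context: For $a,b$ in a commutative ring, $b$ is a pointwise inverse of $a$ if $a=a^2b$ and $b=b^2a$. For a subset $S\subseteq R$, $S^{(-1)}R=R[x_s:s\in S]/I$ where $I$ is generated by $sx_s^2-x_s$ and $s^2x_s-s$ ($s\in S$), and $\eta:R\to S^{(-1)}R$ is the canonical map. For a ring $A$ and $f\in A$, $V(f)=\{\mathfrak p\in\mathrm{Spec}(A): f\in\mathfrak p\}$, and for an ideal $I$, $V(I)=\{\mathfrak p: I\subseteq \mathfrak p\}$. The flat topology on $\mathrm{Spec}(A)$ is the topology having as a basis of open sets the sets $V(I)$ with $I$ ranging over finitely generated ideals of $A$ (this is Hochster's inverse topology). *)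

theory Defs
  imports "HOL-Analysis.Abstract_Topology" "HOL-Algebra.QuotRing" "HOL-Library.Poly_Mapping"
begin

definition tc_ring :: "'a::comm_ring_1 ring" where
  "tc_ring = \<lparr>carrier = UNIV, mult = (*), one = 1, zero = 0, add = (+)\<rparr>"

text \<open>The polynomial ring R[x_s : s in S]: polynomials over R (monomials are finitely
  supported exponent maps 'a =>0 nat) all of whose variables lie in S.\<close>
definition poly_ring_on :: "'a::comm_ring_1 set \<Rightarrow> (('a \<Rightarrow>\<^sub>0 nat) \<Rightarrow>\<^sub>0 'a) ring" where
  "poly_ring_on S = \<lparr>carrier = {p :: (('a \<Rightarrow>\<^sub>0 nat) \<Rightarrow>\<^sub>0 'a). \<forall>m\<in>Poly_Mapping.keys p. Poly_Mapping.keys m \<subseteq> S},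
                      mult = (*), one = 1, zero = 0, add = (+)\<rparr>"

definition pvar :: "'a \<Rightarrow> ('a \<Rightarrow>\<^sub>0 nat) \<Rightarrow>\<^sub>0 'a::comm_ring_1" where
  "pvar s = Poly_Mapping.single (Poly_Mapping.single s 1) 1"

definition pconst :: "'a::comm_ring_1 \<Rightarrow> ('a \<Rightarrow>\<^sub>0 nat) \<Rightarrow>\<^sub>0 'a" where
  "pconst r = Poly_Mapping.single 0 r"

definition pinv_ideal :: "'a::comm_ring_1 set \<Rightarrow> (('a \<Rightarrow>\<^sub>0 nat) \<Rightarrow>\<^sub>0 'a) set" where
  "pinv_ideal S = genideal (poly_ring_on S)
     ({pconst s * pvar s ^ 2 - pvar s | s. s \<in> S} \<union> {pconst (s ^ 2) * pvar s - pconst s | s. s \<in> S})"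

definition pinv_loc :: "'a::comm_ring_1 set \<Rightarrow> (('a \<Rightarrow>\<^sub>0 nat) \<Rightarrow>\<^sub>0 'a) set ring" where
  "pinv_loc S = poly_ring_on S Quot pinv_ideal S"

definition eta :: "'a::comm_ring_1 set \<Rightarrow> 'a \<Rightarrow> (('a \<Rightarrow>\<^sub>0 nat) \<Rightarrow>\<^sub>0 'a) set" where
  "eta S r = pinv_ideal S +>\<^bsub>poly_ring_on S\<^esub> pconst r"

definition Spec :: "('a, 'b) ring_scheme \<Rightarrow> 'a set set" where
  "Spec A = {p. primeideal p A}"

definition Vset :: "('a, 'b) ring_scheme \<Rightarrow> 'a set \<Rightarrow> 'a set set" where
  "Vset A J = {p \<in> Spec A. J \<subseteq> p}"

definition fg_ideal :: "('a, 'b) ring_scheme \<Rightarrow> 'a set \<Rightarrow> bool" where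
  "fg_ideal A J \<longleftrightarrow> ideal J A \<and> (\<exists>F. finite F \<and> F \<subseteq> carrier A \<and> J = genideal A F)"

definition zariski :: "('a, 'b) ring_scheme \<Rightarrow> 'a set topology" where
  "zariski A = topology_generated_by {Spec A - Vset A J | J. ideal J A}"

definition flat_top :: "('a, 'b) ring_scheme \<Rightarrow> 'a set topology" where
  "flat_top A = topology_generated_by {Vset A J | J. fg_ideal A J}"

end

theory Submission
  imports Defs
begin


definition tcr :: "'b::comm_ring_1 set \<Rightarrow> 'b ring" where
  "tcr C = \<lparr>carrier = C, mult = (*), one = 1, zero = 0, add = (+)\<rparr>"

definition subr :: "'b::comm_ring_1 set \<Rightarrow> bool" where
  "subr C \<longleftrightarrow> 0 \<in> C \<and> 1 \<in> C \<and> (\<forall>x\<in>C. \<forall>y\<in>C. x + y \<in> C \<and> x * y \<in> C) \<and> (\<forall>x\<in>C. - x \<in> C)"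

lemma tcr_simps[simp]: "carrier (tcr C) = C" "mult (tcr C) = (*)" "one (tcr C) = 1"
  "zero (tcr C) = 0" "add (tcr C) = (+)"
  by (simp_all add: tcr_def)

lemma tcr_cring: assumes "subr C" shows "cring (tcr C)"
proof (rule cringI)
  show "abelian_group (tcr C)"
  proof (rule abelian_groupI)
    fix x assume "x \<in> carrier (tcr C)"
    then show "\<exists>y\<in>carrier (tcr C). y \<oplus>\<^bsub>tcr C\<^esub> x = \<zero>\<^bsub>tcr C\<^esub>"
      using assms unfolding subr_def by (auto intro!: bexI[of _ "-x"])
  qed (use assms in \<open>auto simp: subr_def algebra_simps\<close>)
  show "comm_monoid (tcr C)"
    by (rule comm_monoidI) (use assms in \<open>auto simp: subr_def algebra_simps\<close>)
qed (auto simp: algebra_simps)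

lemma tcr_a_inv: assumes "subr C" "x \<in> C" shows "a_inv (tcr C) x = - x"
proof -
  interpret R: cring "tcr C" by (rule tcr_cring) fact
  show ?thesis using assms by (intro R.minus_equality) (auto simp: subr_def)
qed

lemma tcr_a_minus: assumes "subr C" "x \<in> C" "y \<in> C" shows "a_minus (tcr C) x y = x - y"
  using assms by (simp add: a_minus_def tcr_a_inv)

definition tideal :: "'b::comm_ring_1 set \<Rightarrow> 'b set \<Rightarrow> bool" where
  "tideal C J \<longleftrightarrow> J \<subseteq> C \<and> 0 \<in> J \<and> (\<forall>x\<in>J. \<forall>y\<in>J. x + y \<in> J) \<and> (\<forall>c\<in>C. \<forall>x\<in>J. c * x \<in> J)"

definition tprime :: "'b::comm_ring_1 set \<Rightarrow> 'b set \<Rightarrow> bool" where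
  "tprime C J \<longleftrightarrow> tideal C J \<and> 1 \<notin> J \<and> (\<forall>x\<in>C. \<forall>y\<in>C. x * y \<in> J \<longrightarrow> x \<in> J \<or> y \<in> J)"

lemma tideal_neg: "subr C \<Longrightarrow> tideal C J \<Longrightarrow> x \<in> J \<Longrightarrow> - x \<in> J"
  unfolding tideal_def subr_def by (metis mult_minus1)

lemma tideal_diff: "subr C \<Longrightarrow> tideal C J \<Longrightarrow> x \<in> J \<Longrightarrow> y \<in> J \<Longrightarrow> x - y \<in> J"
  using tideal_neg[of C J y] unfolding tideal_def by (metis diff_conv_add_uminus)

lemma tideal_rmult: "tideal C J \<Longrightarrow> x \<in> J \<Longrightarrow> c \<in> C \<Longrightarrow> x * c \<in> J"
  unfolding tideal_def by (metis mult.commute)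

lemma tcr_ideal_iff: assumes "subr C" shows "ideal J (tcr C) \<longleftrightarrow> tideal C J"
proof
  assume "ideal J (tcr C)"
  then interpret ideal J "tcr C" .
  have A: "additive_subgroup J (tcr C)" using is_ideal ideal_def by blast
  show "tideal C J" unfolding tideal_def
    using additive_subgroup.a_subset[OF A] additive_subgroup.zero_closed[OF A]
      additive_subgroup.a_closed[OF A] I_l_closed by simp
next
  assume J: "tideal C J"
  interpret R: cring "tcr C" by (rule tcr_cring) fact
  show "ideal J (tcr C)"
  proof (rule idealI)
    show "ring (tcr C)" by (rule R.ring_axioms)
    show "subgroup J (add_monoid (tcr C))"
    proof (rule subgroup.intro)
      fix x assume "x \<in> J"
      moreover have "inv\<^bsub>add_monoid (tcr C)\<^esub> x = a_inv (tcr C) x" by (simp add: a_inv_def)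
      ultimately show "inv\<^bsub>add_monoid (tcr C)\<^esub> x \<in> J"
        using J assms tcr_a_inv[OF assms] tideal_neg[OF assms J] unfolding tideal_def by auto
    qed (use J in \<open>auto simp: tideal_def\<close>)
  qed (use J in \<open>auto simp: tideal_def intro: tideal_rmult\<close>)
qed

lemma tcr_prime_iff: assumes "subr C" shows "primeideal J (tcr C) \<longleftrightarrow> tprime C J"
proof
  assume P: "primeideal J (tcr C)"
  then interpret primeideal J "tcr C" .
  have "tideal C J" using tcr_ideal_iff[OF assms] is_ideal by simp
  moreover have "1 \<notin> J"
  proof
    assume "1 \<in> J"
    then have "C \<subseteq> J" using I_l_closed[of 1] by auto
    then show False using I_notcarr a_subset by auto
  qed
  ultimately show "tprime C J" unfolding tprime_def using I_prime by auto
next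
  assume P: "tprime C J"
  show "primeideal J (tcr C)"
  proof (rule primeidealI)
    show "ideal J (tcr C)" using P tcr_ideal_iff[OF assms] by (simp add: tprime_def)
    show "cring (tcr C)" by (rule tcr_cring) fact
    show "carrier (tcr C) \<noteq> J" using P assms by (auto simp: tprime_def subr_def)
  qed (use P in \<open>auto simp: tprime_def\<close>)
qed

lemma tc_ring_eq: "tc_ring = tcr UNIV" by (simp add: tc_ring_def tcr_def)

definition PC :: "'a::comm_ring_1 set \<Rightarrow> (('a \<Rightarrow>\<^sub>0 nat) \<Rightarrow>\<^sub>0 'a) set" where
  "PC S = {p. \<forall>m\<in>Poly_Mapping.keys p. Poly_Mapping.keys m \<subseteq> S}"

lemma poly_ring_eq: "poly_ring_on S = tcr (PC S)" by (simp add: poly_ring_on_def tcr_def PC_def)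

lemma subr_UNIV: "subr UNIV" by (simp add: subr_def)

lemma keys_add_nat: "Poly_Mapping.keys (a + b :: 'x \<Rightarrow>\<^sub>0 nat) = Poly_Mapping.keys a \<union> Poly_Mapping.keys b"
  by (auto simp: in_keys_iff lookup_add)

lemma subr_PC: "subr (PC S)"
proof -
  have "x + y \<in> PC S" if "x \<in> PC S" "y \<in> PC S" for x y
    using that keys_add[of x y] unfolding PC_def by blast
  moreover have "x * y \<in> PC S" if "x \<in> PC S" "y \<in> PC S" for x y
    using that keys_mult[of x y] unfolding PC_def by (force simp: keys_add_nat)
  moreover have "0 \<in> PC S" "1 \<in> PC S" by (auto simp: PC_def)
  moreover have "- x \<in> PC S" if "x \<in> PC S" for x using that by (simp add: PC_def)
  ultimately show ?thesis unfolding subr_def by blast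
qed



lemma pm_expand: "(f :: 'x \<Rightarrow>\<^sub>0 'b::comm_monoid_add) = (\<Sum>m\<in>Poly_Mapping.keys f. Poly_Mapping.single m (Poly_Mapping.lookup f m))"
proof -
  have "Poly_Mapping.lookup f k = Poly_Mapping.lookup (\<Sum>m\<in>Poly_Mapping.keys f. Poly_Mapping.single m (Poly_Mapping.lookup f m)) k" for k
  proof (cases "k \<in> Poly_Mapping.keys f")
    case True
    then show ?thesis by (simp add: lookup_sum lookup_single when_def)
  next
    case False
    then have "Poly_Mapping.lookup f k = 0" by (simp add: not_in_keys_iff_lookup_eq_zero)
    moreover have "(\<Sum>m\<in>Poly_Mapping.keys f. Poly_Mapping.lookup (Poly_Mapping.single m (Poly_Mapping.lookup f m)) k) = 0"
      using False by (intro sum.neutral) (auto simp: lookup_single when_def)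
    ultimately show ?thesis by (simp add: lookup_sum)
  qed
  then show ?thesis by (rule poly_mapping_eqI)
qed

definition vars :: "(('a \<Rightarrow>\<^sub>0 nat) \<Rightarrow>\<^sub>0 'b::zero) \<Rightarrow> 'a set" where
  "vars f = (\<Union>m\<in>Poly_Mapping.keys f. Poly_Mapping.keys m)"

definition degb :: "(('a \<Rightarrow>\<^sub>0 nat) \<Rightarrow>\<^sub>0 'b::zero) \<Rightarrow> nat" where
  "degb f = (\<Sum>m\<in>Poly_Mapping.keys f. \<Sum>s\<in>Poly_Mapping.keys m. Poly_Mapping.lookup m s)"

definition mv :: "'a::comm_ring_1 set \<Rightarrow> nat \<Rightarrow> ('a \<Rightarrow>\<^sub>0 nat) \<Rightarrow> 'a" where
  "mv V N m = (if Poly_Mapping.keys m \<subseteq> V then \<Prod>s\<in>V. s ^ (N - Poly_Mapping.lookup m s) else 0)"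

definition Psi :: "'a::comm_ring_1 set \<Rightarrow> nat \<Rightarrow> (('a \<Rightarrow>\<^sub>0 nat) \<Rightarrow>\<^sub>0 'a) \<Rightarrow> 'a" where
  "Psi V N f = (\<Sum>m\<in>Poly_Mapping.keys f. Poly_Mapping.lookup f m * mv V N m)"

definition bounded :: "'a set \<Rightarrow> nat \<Rightarrow> (('a \<Rightarrow>\<^sub>0 nat) \<Rightarrow>\<^sub>0 'b::zero) \<Rightarrow> bool" where
  "bounded V N f \<longleftrightarrow> (\<forall>m\<in>Poly_Mapping.keys f. \<forall>s\<in>V. Poly_Mapping.lookup m s \<le> N)"

lemma finite_vars[simp]: "finite (vars f)" by (simp add: vars_def)

lemma lookup_le_degb: assumes "m \<in> Poly_Mapping.keys f" shows "Poly_Mapping.lookup m s \<le> degb f"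
proof (cases "s \<in> Poly_Mapping.keys m")
  case True
  have "Poly_Mapping.lookup m s \<le> (\<Sum>s\<in>Poly_Mapping.keys m. Poly_Mapping.lookup m s)"
    using True by (intro member_le_sum) auto
  also have "\<dots> \<le> degb f" unfolding degb_def
    using assms by (intro member_le_sum[where f = "\<lambda>m. \<Sum>s\<in>Poly_Mapping.keys m. Poly_Mapping.lookup m s"]) auto
  finally show ?thesis .
next
  case False then show ?thesis by (simp add: not_in_keys_iff_lookup_eq_zero)
qed

lemma bounded_degb: "N \<ge> degb f \<Longrightarrow> bounded V N f"
  unfolding bounded_def
proof (intro ballI)
  fix m s assume "N \<ge> degb f" "m \<in> Poly_Mapping.keys f"
  then show "Poly_Mapping.lookup m s \<le> N" using lookup_le_degb[of m f s] by linarith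
qed

lemma Psi_superset: assumes "finite K" "Poly_Mapping.keys f \<subseteq> K"
  shows "Psi V N f = (\<Sum>m\<in>K. Poly_Mapping.lookup f m * mv V N m)"
  unfolding Psi_def using assms by (intro sum.mono_neutral_left) (auto simp: not_in_keys_iff_lookup_eq_zero)

lemma Psi_zero[simp]: "Psi V N 0 = 0" by (simp add: Psi_def)

lemma Psi_add: "Psi V N (f + g) = Psi V N f + Psi V N g"
proof -
  let ?K = "Poly_Mapping.keys f \<union> Poly_Mapping.keys g"
  have "Psi V N (f + g) = (\<Sum>m\<in>?K. Poly_Mapping.lookup (f + g) m * mv V N m)"
    using keys_add[of f g] by (intro Psi_superset) auto
  also have "\<dots> = (\<Sum>m\<in>?K. Poly_Mapping.lookup f m * mv V N m) + (\<Sum>m\<in>?K. Poly_Mapping.lookup g m * mv V N m)"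
    by (simp add: lookup_add distrib_right sum.distrib)
  also have "\<dots> = Psi V N f + Psi V N g"
    by (subst (1 2) Psi_superset[of ?K]) auto
  finally show ?thesis .
qed

lemma Psi_neg: "Psi V N (- f) = - Psi V N f"
  by (simp add: Psi_def sum_negf)

lemma Psi_diff: "Psi V N (f - g) = Psi V N f - Psi V N g"
  using Psi_add[of V N f "- g"] Psi_neg[of V N g] by simp

lemma Psi_sum: "Psi V N (sum F X) = (\<Sum>x\<in>X. Psi V N (F x))"
  by (induction X rule: infinite_finite_induct) (auto simp: Psi_add)

lemma Psi_single: "Psi V N (Poly_Mapping.single m c) = c * mv V N m"
  by (subst Psi_superset[of "{m}"]) auto

definition adm :: "'a set \<Rightarrow> 'a set \<Rightarrow> nat \<Rightarrow> (('a \<Rightarrow>\<^sub>0 nat) \<Rightarrow>\<^sub>0 'b::zero) \<Rightarrow> bool" where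
  "adm p V N f \<longleftrightarrow> finite V \<and> V \<inter> p = {} \<and> vars f - p \<subseteq> V \<and> bounded V N f"

definition Z :: "'a::comm_ring_1 set \<Rightarrow> (('a \<Rightarrow>\<^sub>0 nat) \<Rightarrow>\<^sub>0 'a) \<Rightarrow> bool" where
  "Z p f \<longleftrightarrow> Psi (vars f - p) (degb f) f \<in> p"

lemma adm_canon: "adm p (vars f - p) (degb f) f"
  unfolding adm_def by (auto simp: bounded_degb)

lemma tprime_pow_notin: assumes "tprime UNIV p" "s \<notin> p" shows "s ^ n \<notin> p"
proof (induction n)
  case 0 then show ?case using assms by (simp add: tprime_def)
next
  case (Suc n) then show ?case using assms unfolding tprime_def by (metis UNIV_I power_Suc)
qed

lemma tprime_prod_notin: assumes "tprime UNIV p" "\<And>x. x \<in> A \<Longrightarrow> g x \<notin> p" shows "prod g A \<notin> p"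
  using assms(2)
proof (induction A rule: infinite_finite_induct)
  case (infinite A) then show ?case using assms by (simp add: tprime_def)
next
  case empty then show ?case using assms by (simp add: tprime_def)
next
  case (insert x F) then show ?case using assms unfolding tprime_def by (metis UNIV_I insertCI prod.insert)
qed

lemma tprime_mult_notin: assumes "tprime UNIV p" "c \<notin> p" shows "x * c \<in> p \<longleftrightarrow> x \<in> p"
proof
  assume "x * c \<in> p" then show "x \<in> p" using assms unfolding tprime_def by blast
next
  assume "x \<in> p"
  then have "c * x \<in> p" using assms unfolding tprime_def tideal_def by blast
  then show "x * c \<in> p" by (simp add: mult.commute)
qed

lemma mv_add:
  assumes "\<forall>s\<in>V. Poly_Mapping.lookup a s \<le> N" "\<forall>s\<in>V. Poly_Mapping.lookup b s \<le> N"
  shows "mv V (2 * N) (a + b) = mv V N a * mv V N b"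
proof (cases "Poly_Mapping.keys a \<subseteq> V \<and> Poly_Mapping.keys b \<subseteq> V")
  case True
  have "(\<Prod>s\<in>V. s ^ (2 * N - Poly_Mapping.lookup (a + b) s)) = (\<Prod>s\<in>V. s ^ (N - Poly_Mapping.lookup a s) * s ^ (N - Poly_Mapping.lookup b s))"
  proof (rule prod.cong)
    fix s assume "s \<in> V"
    then have "2 * N - Poly_Mapping.lookup (a + b) s = (N - Poly_Mapping.lookup a s) + (N - Poly_Mapping.lookup b s)"
      using assms by (simp add: lookup_add)
    then show "s ^ (2 * N - Poly_Mapping.lookup (a + b) s) = s ^ (N - Poly_Mapping.lookup a s) * s ^ (N - Poly_Mapping.lookup b s)"
      by (simp add: power_add)
  qed simp
  then show ?thesis using True by (simp add: mv_def keys_add_nat prod.distrib)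
next
  case False
  then show ?thesis by (auto simp: mv_def keys_add_nat)
qed

lemma Psi_mult:
  assumes "bounded V N f" "bounded V N g"
  shows "Psi V (2 * N) (f * g) = Psi V N f * Psi V N g"
proof -
  have "f * g = (\<Sum>a\<in>Poly_Mapping.keys f. Poly_Mapping.single a (Poly_Mapping.lookup f a)) *
               (\<Sum>b\<in>Poly_Mapping.keys g. Poly_Mapping.single b (Poly_Mapping.lookup g b))"
    using pm_expand[of f] pm_expand[of g] by simp
  also have "\<dots> = (\<Sum>a\<in>Poly_Mapping.keys f. \<Sum>b\<in>Poly_Mapping.keys g.
                    Poly_Mapping.single (a + b) (Poly_Mapping.lookup f a * Poly_Mapping.lookup g b))"
    by (simp add: sum_product mult_single)
  finally have fg: "f * g = \<dots>" .
  have "Psi V (2 * N) (f * g) = (\<Sum>a\<in>Poly_Mapping.keys f. \<Sum>b\<in>Poly_Mapping.keys g.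
                    (Poly_Mapping.lookup f a * Poly_Mapping.lookup g b) * mv V (2 * N) (a + b))"
    by (simp add: fg Psi_sum Psi_single)
  also have "\<dots> = (\<Sum>a\<in>Poly_Mapping.keys f. \<Sum>b\<in>Poly_Mapping.keys g.
                    (Poly_Mapping.lookup f a * mv V N a) * (Poly_Mapping.lookup g b * mv V N b))"
  proof (intro sum.cong refl)
    fix a b assume "a \<in> Poly_Mapping.keys f" "b \<in> Poly_Mapping.keys g"
    then show "Poly_Mapping.lookup f a * Poly_Mapping.lookup g b * mv V (2 * N) (a + b) = Poly_Mapping.lookup f a * mv V N a * (Poly_Mapping.lookup g b * mv V N b)"
      using assms mv_add[of V a N b] by (simp add: bounded_def mult_ac)
  qed
  also have "\<dots> = Psi V N f * Psi V N g" by (simp add: Psi_def sum_product)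
  finally show ?thesis .
qed

lemma Psi_change:
  assumes "finite V'" "V \<subseteq> V'" "N \<le> N'" "V' \<inter> p = {}" "vars f - p \<subseteq> V" "bounded V N f"
  shows "Psi V' N' f = Psi V N f * ((\<Prod>s\<in>V. s ^ (N' - N)) * (\<Prod>s\<in>V' - V. s ^ N'))"
proof -
  have fin: "finite V" using assms finite_subset by blast
  have H: "mv V' N' m = mv V N m * ((\<Prod>s\<in>V. s ^ (N' - N)) * (\<Prod>s\<in>V' - V. s ^ N'))"
    if m: "m \<in> Poly_Mapping.keys f" for m
  proof (cases "Poly_Mapping.keys m \<subseteq> V")
    case True
    have "(\<Prod>s\<in>V'. s ^ (N' - Poly_Mapping.lookup m s)) = (\<Prod>s\<in>V' - V. s ^ (N' - Poly_Mapping.lookup m s)) * (\<Prod>s\<in>V. s ^ (N' - Poly_Mapping.lookup m s))"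
      using prod.subset_diff[OF assms(2) assms(1)] by simp
    also have "(\<Prod>s\<in>V' - V. s ^ (N' - Poly_Mapping.lookup m s)) = (\<Prod>s\<in>V' - V. s ^ N')"
    proof (rule prod.cong)
      fix s assume "s \<in> V' - V"
      then have "Poly_Mapping.lookup m s = 0" using True by (metis DiffD2 in_keys_iff subsetD)
      then show "s ^ (N' - Poly_Mapping.lookup m s) = s ^ N'" by simp
    qed simp
    also have "(\<Prod>s\<in>V. s ^ (N' - Poly_Mapping.lookup m s)) = (\<Prod>s\<in>V. s ^ (N - Poly_Mapping.lookup m s) * s ^ (N' - N))"
    proof (rule prod.cong)
      fix s assume "s \<in> V"
      then have "Poly_Mapping.lookup m s \<le> N" using assms(6) m by (auto simp: bounded_def)
      then have "N' - Poly_Mapping.lookup m s = (N - Poly_Mapping.lookup m s) + (N' - N)" using assms(3) by simp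
      then show "s ^ (N' - Poly_Mapping.lookup m s) = s ^ (N - Poly_Mapping.lookup m s) * s ^ (N' - N)" by (simp add: power_add)
    qed simp
    finally show ?thesis using True assms(2) by (simp add: mv_def prod.distrib mult_ac)
  next
    case False
    then obtain s where s: "s \<in> Poly_Mapping.keys m" "s \<notin> V" by blast
    then have "s \<in> vars f" using m by (auto simp: vars_def)
    then have "s \<in> p" using s assms(5) by blast
    then have "s \<notin> V'" using assms(4) by blast
    then show ?thesis using False s by (auto simp: mv_def)
  qed
  show ?thesis unfolding Psi_def sum_distrib_right
    by (intro sum.cong refl) (simp add: H mult.assoc)
qed

lemma Z_iff: assumes p: "tprime UNIV p" and a: "adm p V N f"
  shows "Z p f \<longleftrightarrow> Psi V N f \<in> p"
proof -
  let ?V0 = "vars f - p" and ?N0 = "degb f" and ?M = "max N (degb f)"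
  have fV: "finite V" "V \<inter> p = {}" "vars f - p \<subseteq> V" "bounded V N f" using a by (auto simp: adm_def)
  have c1: "Psi V ?M f = Psi V N f * ((\<Prod>s\<in>V. s ^ (?M - N)) * (\<Prod>s\<in>V - V. s ^ ?M))"
    using fV by (intro Psi_change) auto
  have c2: "Psi V ?M f = Psi ?V0 ?N0 f * ((\<Prod>s\<in>?V0. s ^ (?M - ?N0)) * (\<Prod>s\<in>V - ?V0. s ^ ?M))"
    using fV by (intro Psi_change) (auto simp: bounded_degb)
  have nz1: "(\<Prod>s\<in>V. s ^ (?M - N)) * (\<Prod>s\<in>V - V. s ^ ?M) \<notin> p"
  proof -
    have "(\<Prod>s\<in>V. s ^ (?M - N)) \<notin> p"
      apply (rule tprime_prod_notin[OF p]) apply (rule tprime_pow_notin[OF p]) using fV by auto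
    then show ?thesis using p unfolding tprime_def by simp
  qed
  have nz2: "(\<Prod>s\<in>?V0. s ^ (?M - ?N0)) * (\<Prod>s\<in>V - ?V0. s ^ ?M) \<notin> p"
  proof -
    have "(\<Prod>s\<in>?V0. s ^ (?M - ?N0)) \<notin> p"
      apply (rule tprime_prod_notin[OF p]) apply (rule tprime_pow_notin[OF p]) by auto
    moreover have "(\<Prod>s\<in>V - ?V0. s ^ ?M) \<notin> p"
      apply (rule tprime_prod_notin[OF p]) apply (rule tprime_pow_notin[OF p]) using fV by auto
    ultimately show ?thesis using p unfolding tprime_def by blast
  qed
  have e1: "Psi V ?M f \<in> p \<longleftrightarrow> Psi V N f \<in> p"
    unfolding c1 by (rule tprime_mult_notin[OF p nz1])
  have e2: "Psi V ?M f \<in> p \<longleftrightarrow> Psi ?V0 ?N0 f \<in> p"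
    unfolding c2 by (rule tprime_mult_notin[OF p nz2])
  show ?thesis unfolding Z_def by (simp only: e2[symmetric] e1)
qed



lemma pconst_mult: "pconst (a * b) = pconst a * pconst b"
  by (simp add: pconst_def mult_single)
lemma pconst_add: "pconst (a + b) = pconst a + pconst b"
  by (simp add: pconst_def single_add)
lemma pconst_0[simp]: "pconst 0 = 0" by (simp add: pconst_def)
lemma pconst_1[simp]: "pconst 1 = 1" by (simp add: pconst_def)
lemma pconst_neg: "pconst (- a) = - pconst a" by (simp add: pconst_def single_uminus)
lemma pconst_diff: "pconst (a - b) = pconst a - pconst b" by (simp add: pconst_def single_diff)
lemma pconst_pow: "pconst (a ^ n) = pconst a ^ n"
  by (induction n) (simp_all add: pconst_mult)
lemma pconst_prod: "pconst (prod g A) = (\<Prod>x\<in>A. pconst (g x))"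
  by (induction A rule: infinite_finite_induct) (simp_all add: pconst_mult)
lemma pconst_sum: "pconst (sum g A) = (\<Sum>x\<in>A. pconst (g x))"
  by (induction A rule: infinite_finite_induct) (simp_all add: pconst_add)
lemma pconst_mult_single: "pconst c * Poly_Mapping.single m d = Poly_Mapping.single m (c * d)"
  by (simp add: pconst_def mult_single)

lemma pvar_pow: "pvar s ^ k = Poly_Mapping.single (Poly_Mapping.single s k) 1"
proof (induction k)
  case 0 then show ?case by simp
next
  case (Suc k) then show ?case
    by (simp add: pvar_def mult_single single_add[symmetric])
qed

lemma prod_singles: "(\<Prod>s\<in>K. Poly_Mapping.single (g s :: 'x \<Rightarrow>\<^sub>0 nat) (1::'b::comm_ring_1)) = Poly_Mapping.single (\<Sum>s\<in>K. g s) 1"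
  by (induction K rule: infinite_finite_induct) (simp_all add: mult_single)

lemma mono_factor: "Poly_Mapping.single m c = pconst c * (\<Prod>s\<in>Poly_Mapping.keys m. pvar s ^ Poly_Mapping.lookup m s)"
proof -
  have "(\<Prod>s\<in>Poly_Mapping.keys m. pvar s ^ Poly_Mapping.lookup m s)
      = Poly_Mapping.single (\<Sum>s\<in>Poly_Mapping.keys m. Poly_Mapping.single s (Poly_Mapping.lookup m s)) (1::'a::comm_ring_1)"
    by (simp add: pvar_pow prod_singles)
  also have "(\<Sum>s\<in>Poly_Mapping.keys m. Poly_Mapping.single s (Poly_Mapping.lookup m s)) = m"
    using pm_expand[of m] by simp
  finally show ?thesis by (simp add: pconst_mult_single)
qed

lemma pconst_PC[simp]: "pconst c \<in> PC S"
  by (simp add: PC_def pconst_def)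
lemma pvar_PC: "s \<in> S \<Longrightarrow> pvar s \<in> PC S"
  by (simp add: PC_def pvar_def)
lemma vars_PC: "f \<in> PC S \<Longrightarrow> vars f \<subseteq> S"
  by (auto simp: PC_def vars_def)

lemma subr_mult: "subr C \<Longrightarrow> x \<in> C \<Longrightarrow> y \<in> C \<Longrightarrow> x * y \<in> C" by (simp add: subr_def)
lemma subr_add: "subr C \<Longrightarrow> x \<in> C \<Longrightarrow> y \<in> C \<Longrightarrow> x + y \<in> C" by (simp add: subr_def)
lemma subr_neg: "subr C \<Longrightarrow> x \<in> C \<Longrightarrow> - x \<in> C" by (simp add: subr_def)
lemma subr_diff: "subr C \<Longrightarrow> x \<in> C \<Longrightarrow> y \<in> C \<Longrightarrow> x - y \<in> C"
  using subr_add[of C x "- y"] subr_neg[of C y] by simp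
lemma subr_one: "subr C \<Longrightarrow> 1 \<in> C" by (simp add: subr_def)
lemma subr_zero: "subr C \<Longrightarrow> 0 \<in> C" by (simp add: subr_def)
lemma subr_pow: "subr C \<Longrightarrow> x \<in> C \<Longrightarrow> x ^ n \<in> C"
  by (induction n) (simp_all add: subr_one subr_mult)
lemma subr_prod: "subr C \<Longrightarrow> (\<And>x. x \<in> A \<Longrightarrow> g x \<in> C) \<Longrightarrow> prod g A \<in> C"
  by (induction A rule: infinite_finite_induct) (simp_all add: subr_one subr_mult)
lemma subr_sum: "subr C \<Longrightarrow> (\<And>x. x \<in> A \<Longrightarrow> g x \<in> C) \<Longrightarrow> sum g A \<in> C"
  by (induction A rule: infinite_finite_induct) (simp_all add: subr_zero subr_add)

lemma tideal_add: "tideal C J \<Longrightarrow> x \<in> J \<Longrightarrow> y \<in> J \<Longrightarrow> x + y \<in> J" by (simp add: tideal_def)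
lemma tideal_zero: "tideal C J \<Longrightarrow> 0 \<in> J" by (simp add: tideal_def)
lemma tideal_lmult: "tideal C J \<Longrightarrow> c \<in> C \<Longrightarrow> x \<in> J \<Longrightarrow> c * x \<in> J" by (simp add: tideal_def)
lemma tideal_sub: "tideal C J \<Longrightarrow> x \<in> J \<Longrightarrow> x \<in> C" by (auto simp: tideal_def)
lemma tideal_sum: "tideal C J \<Longrightarrow> (\<And>x. x \<in> A \<Longrightarrow> g x \<in> J) \<Longrightarrow> sum g A \<in> J"
  by (induction A rule: infinite_finite_induct) (simp_all add: tideal_zero tideal_add)

lemma tideal_prod_mem:
  assumes "subr C" "tideal C J" "finite A" "\<And>x. x \<in> A \<Longrightarrow> g x \<in> C" "a \<in> A" "g a \<in> J"
  shows "prod g A \<in> J"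
proof -
  have "prod g A = g a * prod g (A - {a})" using assms(3,5) by (simp add: prod.remove)
  moreover have "prod g (A - {a}) \<in> C" using assms by (intro subr_prod) auto
  ultimately show ?thesis using assms tideal_rmult by metis
qed

lemma tideal_pow_mem: "tideal C J \<Longrightarrow> subr C \<Longrightarrow> x \<in> J \<Longrightarrow> k > 0 \<Longrightarrow> x ^ k \<in> J"
proof (induction k)
  case 0 then show ?case by simp
next
  case (Suc k)
  have "x ^ Suc k = x ^ k * x" by (simp add: mult.commute)
  moreover have "x ^ k \<in> C" using Suc tideal_sub subr_pow by metis
  ultimately show ?case using Suc tideal_lmult by metis
qed

lemma cong_mult:
  assumes "subr C" "tideal C J" "a \<in> C" "b \<in> C" "a' \<in> C" "b' \<in> C" "a - b \<in> J" "a' - b' \<in> J"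
  shows "a * a' - b * b' \<in> J"
proof -
  have "a * a' - b * b' = a * (a' - b') + b' * (a - b)" by (simp add: algebra_simps)
  then show ?thesis using assms by (metis tideal_add tideal_lmult)
qed

lemma cong_prod:
  assumes "subr C" "tideal C J"
    "\<And>s. s \<in> K \<Longrightarrow> u s \<in> C" "\<And>s. s \<in> K \<Longrightarrow> v s \<in> C" "\<And>s. s \<in> K \<Longrightarrow> u s - v s \<in> J"
  shows "prod u K - prod v K \<in> J"
  using assms(3-5)
proof (induction K rule: infinite_finite_induct)
  case (infinite K) then show ?case using assms tideal_zero by simp
next
  case empty then show ?case using assms tideal_zero by simp
next
  case (insert x F)
  have "u x * prod u F - v x * prod v F \<in> J"
    using insert by (intro cong_mult[OF assms(1,2)]) (auto intro: subr_prod[OF assms(1)])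
  then show ?case using insert by simp
qed

lemma cong_pow1:
  assumes "subr C" "tideal C J" "e \<in> C" "e - 1 \<in> J"
  shows "e ^ k - 1 \<in> J"
proof (induction k)
  case 0 then show ?case using assms tideal_zero by simp
next
  case (Suc k)
  have "e * e ^ k - 1 * 1 \<in> J"
    using assms Suc by (intro cong_mult[OF assms(1,2)]) (auto intro: subr_pow subr_one)
  then show ?case by simp
qed



lemma vars_add: "vars (f + g) \<subseteq> vars f \<union> vars g"
  using keys_add[of f g] by (auto simp: vars_def)
lemma vars_neg[simp]: "vars (- f) = vars f" by (simp add: vars_def)
lemma degb_neg[simp]: "degb (- f) = degb f" by (simp add: degb_def)
lemma vars_mult: "vars (f * g) \<subseteq> vars f \<union> vars g"
proof
  fix s assume "s \<in> vars (f * g)"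
  then obtain m where m: "m \<in> Poly_Mapping.keys (f * g)" "s \<in> Poly_Mapping.keys m" by (auto simp: vars_def)
  then obtain a b where "m = a + b" "a \<in> Poly_Mapping.keys f" "b \<in> Poly_Mapping.keys g"
    using keys_mult[of f g] by blast
  then show "s \<in> vars f \<union> vars g" using m(2) by (auto simp: vars_def keys_add_nat)
qed

lemma bounded_mono: "bounded V N f \<Longrightarrow> N \<le> N' \<Longrightarrow> bounded V N' f"
  unfolding bounded_def by (meson le_trans)
lemma bounded_add: "bounded V N f \<Longrightarrow> bounded V N g \<Longrightarrow> bounded V N (f + g)"
  unfolding bounded_def using keys_add[of f g] by blast
lemma bounded_mult: assumes "bounded V N f" "bounded V N g" shows "bounded V (2 * N) (f * g)"
  unfolding bounded_def
proof (intro ballI)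
  fix m s assume "m \<in> Poly_Mapping.keys (f * g)" "s \<in> V"
  then obtain a b where ab: "m = a + b" "a \<in> Poly_Mapping.keys f" "b \<in> Poly_Mapping.keys g"
    using keys_mult[of f g] by blast
  have "Poly_Mapping.lookup a s \<le> N" "Poly_Mapping.lookup b s \<le> N"
    using assms ab \<open>s \<in> V\<close> by (auto simp: bounded_def)
  then show "Poly_Mapping.lookup m s \<le> 2 * N" using ab by (simp add: lookup_add)
qed

lemma adm_two:
  fixes f g :: "('a::comm_ring_1 \<Rightarrow>\<^sub>0 nat) \<Rightarrow>\<^sub>0 'a"
    and p :: "'a set"
  defines "V \<equiv> vars f \<union> vars g - p" and "N \<equiv> degb f + degb g"
  shows "adm p V N f" "adm p V N g"
  unfolding adm_def V_def N_def by (auto intro: bounded_degb)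

lemma Z_zero: "tprime UNIV p \<Longrightarrow> Z p 0"
  by (simp add: Z_def tprime_def tideal_def)

lemma Z_add: assumes p: "tprime UNIV p" and "Z p f" "Z p g" shows "Z p (f + g)"
proof -
  let ?V = "vars f \<union> vars g - p" and ?N = "degb f + degb g"
  have a: "adm p ?V ?N f" "adm p ?V ?N g" using adm_two by blast+
  have "adm p ?V ?N (f + g)" using a vars_add[of f g]
    unfolding adm_def by (blast intro: bounded_add)
  moreover have "Psi ?V ?N f \<in> p" "Psi ?V ?N g \<in> p" using assms a Z_iff by blast+
  ultimately show ?thesis using Z_iff[OF p] p by (simp add: Psi_add tprime_def tideal_def)
qed

lemma Z_neg: assumes p: "tprime UNIV p" and "Z p f" shows "Z p (- f)"
proof -
  have "- Psi (vars f - p) (degb f) f \<in> p" using assms tideal_neg[OF subr_UNIV]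
    unfolding Z_def tprime_def by blast
  then show ?thesis by (simp add: Z_def Psi_neg)
qed

lemma Z_mult_adm:
  assumes p: "tprime UNIV p"
  shows "Z p (f * g) \<longleftrightarrow> Psi (vars f \<union> vars g - p) (degb f + degb g) f * Psi (vars f \<union> vars g - p) (degb f + degb g) g \<in> p"
proof -
  let ?V = "vars f \<union> vars g - p" and ?N = "degb f + degb g"
  have a: "adm p ?V ?N f" "adm p ?V ?N g" using adm_two by blast+
  have "adm p ?V (2 * ?N) (f * g)" using a vars_mult[of f g]
    unfolding adm_def by (blast intro: bounded_mult)
  then have "Z p (f * g) \<longleftrightarrow> Psi ?V (2 * ?N) (f * g) \<in> p" by (rule Z_iff[OF p])
  moreover have "Psi ?V (2 * ?N) (f * g) = Psi ?V ?N f * Psi ?V ?N g"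
    using a by (intro Psi_mult) (auto simp: adm_def)
  ultimately show ?thesis by simp
qed

lemma Z_mult: assumes p: "tprime UNIV p" and "Z p f" shows "Z p (g * f)"
proof -
  let ?V = "vars f \<union> vars g - p" and ?N = "degb f + degb g"
  have a: "adm p ?V ?N f" using adm_two by blast
  have "Psi ?V ?N f \<in> p" using assms a Z_iff by blast
  then have "Psi ?V ?N f * Psi ?V ?N g \<in> p" using p tideal_rmult unfolding tprime_def by blast
  then have "Z p (f * g)" using Z_mult_adm[OF p] by simp
  then show ?thesis by (simp add: mult.commute)
qed

lemma Z_prime: assumes p: "tprime UNIV p" and "Z p (f * g)" shows "Z p f \<or> Z p g"
proof -
  let ?V = "vars f \<union> vars g - p" and ?N = "degb f + degb g"
  have a: "adm p ?V ?N f" "adm p ?V ?N g" using adm_two by blast+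
  have "Psi ?V ?N f * Psi ?V ?N g \<in> p" using Z_mult_adm[OF p] assms by simp
  then have "Psi ?V ?N f \<in> p \<or> Psi ?V ?N g \<in> p" using p unfolding tprime_def by blast
  then show ?thesis using a Z_iff[OF p] by blast
qed

lemma vars_single_sub: "vars (Poly_Mapping.single m c) \<subseteq> Poly_Mapping.keys m"
  by (auto simp: vars_def)

lemma Z_one: assumes p: "tprime UNIV p" shows "\<not> Z p 1"
proof -
  have "vars (1 :: ('a \<Rightarrow>\<^sub>0 nat) \<Rightarrow>\<^sub>0 'a) = {}" by (simp add: vars_def)
  moreover have "degb (1 :: ('a \<Rightarrow>\<^sub>0 nat) \<Rightarrow>\<^sub>0 'a) = 0" by (simp add: degb_def)
  moreover have "Psi {} 0 (1 :: ('a \<Rightarrow>\<^sub>0 nat) \<Rightarrow>\<^sub>0 'a) = 1"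
    by (simp add: Psi_def mv_def)
  ultimately show ?thesis using p by (simp add: Z_def tprime_def)
qed

lemma Z_pconst: assumes p: "tprime UNIV p" shows "Z p (pconst c) \<longleftrightarrow> c \<in> p"
proof -
  have "adm p {} 0 (pconst c)"
    by (auto simp: adm_def bounded_def pconst_def vars_def)
  moreover have "Psi {} 0 (pconst c) = c"
    unfolding pconst_def Psi_single by (simp add: mv_def)
  ultimately show ?thesis using Z_iff[OF p] by simp
qed

lemma pconst_pvar_pow: "pconst c * pvar s ^ k = Poly_Mapping.single (Poly_Mapping.single s k) c"
  by (simp add: pvar_pow pconst_mult_single)

lemma vars_diff: "vars (f - g) \<subseteq> vars f \<union> vars g"
  using keys_diff[of f g] by (auto simp: vars_def)
lemma keys_single_sub: "Poly_Mapping.keys (Poly_Mapping.single m c) \<subseteq> {m}" by simp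
lemma vars_single_s: "vars (Poly_Mapping.single (Poly_Mapping.single s k) c) \<subseteq> {s}"
  using vars_single_sub[of "Poly_Mapping.single s k" c] keys_single_sub[of s k] by (meson subset_trans)
lemma vars_single_0: "vars (Poly_Mapping.single 0 c) = {}"
  using vars_single_sub[of 0 c] by auto

lemma mv_single_empty: "k > 0 \<Longrightarrow> mv {} N (Poly_Mapping.single s k) = 0"
  by (simp add: mv_def)
lemma mv_single_s: "k \<le> N \<Longrightarrow> mv {s} N (Poly_Mapping.single s k) = s ^ (N - k)"
  by (simp add: mv_def)

lemma Z_gen1: assumes p: "tprime UNIV p"
  shows "Z p (pconst s * pvar s ^ 2 - pvar s)"
proof -
  let ?f = "pconst s * pvar s ^ 2 - pvar s"
  have f: "?f = Poly_Mapping.single (Poly_Mapping.single s 2) s - Poly_Mapping.single (Poly_Mapping.single s 1) 1"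
    unfolding pconst_pvar_pow by (simp add: pvar_def)
  have "vars ?f \<subseteq> vars (Poly_Mapping.single (Poly_Mapping.single s 2) s) \<union> vars (Poly_Mapping.single (Poly_Mapping.single s 1) (1::'a))" unfolding f by (rule vars_diff)
  also have "\<dots> \<subseteq> {s}" using vars_single_s[of s 2 s] vars_single_s[of s 1 "1::'a"] by blast
  finally have vars: "vars ?f \<subseteq> {s}" .
  have "Poly_Mapping.keys ?f \<subseteq> Poly_Mapping.keys (Poly_Mapping.single (Poly_Mapping.single s 2) s) \<union> Poly_Mapping.keys (Poly_Mapping.single (Poly_Mapping.single s 1) (1::'a))" unfolding f by (rule keys_diff)
  also have "\<dots> \<subseteq> {Poly_Mapping.single s 2, Poly_Mapping.single s 1}" by auto
  finally have keys: "Poly_Mapping.keys ?f \<subseteq> {Poly_Mapping.single s 2, Poly_Mapping.single s 1}" .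
  have adm: "adm p ({s} - p) 2 ?f"
    unfolding adm_def bounded_def using vars keys by (auto simp: lookup_single when_def)
  have "Psi ({s} - p) 2 ?f = s * mv ({s} - p) 2 (Poly_Mapping.single s 2) - mv ({s} - p) 2 (Poly_Mapping.single s 1)"
    unfolding f Psi_diff Psi_single by simp
  also have "\<dots> \<in> p"
  proof (cases "s \<in> p")
    case True
    then have "{s} - p = {}" by simp
    then show ?thesis using p by (simp add: mv_single_empty Z_def tprime_def tideal_def)
  next
    case False
    then have "{s} - p = {s}" by auto
    then show ?thesis using p by (simp add: mv_single_s tprime_def tideal_def)
  qed
  finally show ?thesis using Z_iff[OF p adm] by simp
qed

lemma Z_gen2: assumes p: "tprime UNIV p"
  shows "Z p (pconst (s ^ 2) * pvar s - pconst s)"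
proof -
  let ?f = "pconst (s ^ 2) * pvar s - pconst s"
  have f: "?f = Poly_Mapping.single (Poly_Mapping.single s 1) (s ^ 2) - Poly_Mapping.single 0 s"
    unfolding pvar_def pconst_mult_single by (simp add: pconst_def)
  have "vars ?f \<subseteq> vars (Poly_Mapping.single (Poly_Mapping.single s 1) (s ^ 2)) \<union> vars (Poly_Mapping.single 0 s)" unfolding f by (rule vars_diff)
  also have "\<dots> \<subseteq> {s}" using vars_single_s[of s 1 "s^2"] by (simp add: vars_single_0)
  finally have vars: "vars ?f \<subseteq> {s}" .
  have "Poly_Mapping.keys ?f \<subseteq> Poly_Mapping.keys (Poly_Mapping.single (Poly_Mapping.single s 1) (s ^ 2)) \<union> Poly_Mapping.keys (Poly_Mapping.single 0 s)" unfolding f by (rule keys_diff)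
  also have "\<dots> \<subseteq> {Poly_Mapping.single s 1, 0}" by auto
  finally have keys: "Poly_Mapping.keys ?f \<subseteq> {Poly_Mapping.single s 1, 0}" .
  have adm: "adm p ({s} - p) 2 ?f"
    unfolding adm_def bounded_def using vars keys by (auto simp: lookup_single when_def)
  have "Psi ({s} - p) 2 ?f = s ^ 2 * mv ({s} - p) 2 (Poly_Mapping.single s 1) - s * mv ({s} - p) 2 0"
    unfolding f Psi_diff Psi_single by simp
  also have "\<dots> \<in> p"
  proof (cases "s \<in> p")
    case True
    then have "{s} - p = {}" by simp
    moreover have "- s \<in> p" using True p tideal_neg[OF subr_UNIV] unfolding tprime_def by blast
    ultimately show ?thesis using p by (simp add: mv_single_empty mv_def)
  next
    case False
    then have "{s} - p = {s}" by auto
    then show ?thesis using p by (simp add: mv_def tprime_def tideal_def power_Suc mult_ac)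
  qed
  finally show ?thesis using Z_iff[OF p adm] by simp
qed



definition Zset :: "'a::comm_ring_1 set \<Rightarrow> 'a set \<Rightarrow> (('a \<Rightarrow>\<^sub>0 nat) \<Rightarrow>\<^sub>0 'a) set" where
  "Zset S p = {f \<in> PC S. Z p f}"

lemma Zset_tprime: assumes p: "tprime UNIV p" shows "tprime (PC S) (Zset S p)"
proof -
  have "tideal (PC S) (Zset S p)" unfolding tideal_def Zset_def
    using Z_zero[OF p] Z_add[OF p] Z_mult[OF p] subr_PC[of S]
    by (auto simp: subr_zero subr_add subr_mult)
  moreover have "1 \<notin> Zset S p" using Z_one[OF p] by (simp add: Zset_def)
  moreover have "\<forall>x\<in>PC S. \<forall>y\<in>PC S. x * y \<in> Zset S p \<longrightarrow> x \<in> Zset S p \<or> y \<in> Zset S p"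
    using Z_prime[OF p] by (auto simp: Zset_def)
  ultimately show ?thesis by (simp add: tprime_def)
qed

lemma gen1_PC: "s \<in> S \<Longrightarrow> pconst s * pvar s ^ 2 - pvar s \<in> PC S"
  using subr_PC[of S] pvar_PC[of s S] by (intro subr_diff subr_mult subr_pow) auto
lemma gen2_PC: "s \<in> S \<Longrightarrow> pconst (s ^ 2) * pvar s - pconst s \<in> PC S"
  using subr_PC[of S] pvar_PC[of s S] by (intro subr_diff subr_mult) auto

lemma pinv_ideal_sub_Zset: assumes p: "tprime UNIV p" shows "pinv_ideal S \<subseteq> Zset S p"
proof -
  interpret R: cring "tcr (PC S)" by (rule tcr_cring[OF subr_PC])
  have "ideal (Zset S p) (tcr (PC S))"
    using tcr_ideal_iff[OF subr_PC, of "Zset S p" S] Zset_tprime[OF p, of S] unfolding tprime_def by blast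
  moreover have "{pconst s * pvar s ^ 2 - pvar s | s. s \<in> S} \<union> {pconst (s ^ 2) * pvar s - pconst s | s. s \<in> S} \<subseteq> Zset S p"
    using Z_gen1[OF p] Z_gen2[OF p] gen1_PC gen2_PC by (auto simp: Zset_def)
  ultimately show ?thesis unfolding pinv_ideal_def poly_ring_eq by (rule R.genideal_minimal)
qed

lemma pinv_ideal_gens:
  assumes "s \<in> S"
  shows "pconst s * pvar s ^ 2 - pvar s \<in> pinv_ideal S" "pconst (s ^ 2) * pvar s - pconst s \<in> pinv_ideal S"
proof -
  interpret R: cring "tcr (PC S)" by (rule tcr_cring[OF subr_PC])
  let ?G = "{pconst s * pvar s ^ 2 - pvar s | s. s \<in> S} \<union> {pconst (s ^ 2) * pvar s - pconst s | s. s \<in> S}"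
  have "?G \<subseteq> PC S" using gen1_PC gen2_PC by auto
  then have "?G \<subseteq> pinv_ideal S" unfolding pinv_ideal_def poly_ring_eq
    by (intro R.genideal_self) simp
  then show "pconst s * pvar s ^ 2 - pvar s \<in> pinv_ideal S" "pconst (s ^ 2) * pvar s - pconst s \<in> pinv_ideal S"
    using assms by auto
qed

lemma contract_tprime:
  assumes Q: "tprime (PC S) Q" shows "tprime UNIV {r. pconst r \<in> Q}"
proof -
  have I: "tideal (PC S) Q" using Q by (simp add: tprime_def)
  have "tideal UNIV {r. pconst r \<in> Q}" unfolding tideal_def
    using tideal_zero[OF I] tideal_add[OF I] tideal_lmult[OF I]
    by (auto simp: pconst_add pconst_mult)
  moreover have "1 \<notin> {r. pconst r \<in> Q}" using Q by (simp add: tprime_def)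
  moreover have "x * y \<in> {r. pconst r \<in> Q} \<Longrightarrow> x \<in> {r. pconst r \<in> Q} \<or> y \<in> {r. pconst r \<in> Q}" for x y
    using Q unfolding tprime_def by (simp add: pconst_mult)
  ultimately show ?thesis unfolding tprime_def by blast
qed

lemma char_lemma:
  assumes Q: "tprime (PC S) Q"
    and g1: "\<And>s. s \<in> S \<Longrightarrow> pconst s * pvar s ^ 2 - pvar s \<in> Q"
    and g2: "\<And>s. s \<in> S \<Longrightarrow> pconst (s ^ 2) * pvar s - pconst s \<in> Q"
    and f: "f \<in> PC S"
  shows "f \<in> Q \<longleftrightarrow> Z {r. pconst r \<in> Q} f"
proof -
  define p where "p = {r. pconst r \<in> Q}"
  have p: "tprime UNIV p" unfolding p_def by (rule contract_tprime[OF Q])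
  have I: "tideal (PC S) Q" using Q by (simp add: tprime_def)
  have sPC: "subr (PC S)" by (rule subr_PC)
  have pv: "pvar s \<in> Q" if "s \<in> S" "s \<in> p" for s
  proof -
    have "pconst s * pvar s ^ 2 \<in> Q"
      using that I pvar_PC[of s S] by (intro tideal_rmult[OF I]) (auto simp: p_def intro: subr_pow[OF sPC])
    then have "pconst s * pvar s ^ 2 - (pconst s * pvar s ^ 2 - pvar s) \<in> Q"
      using g1[OF that(1)] tideal_diff[OF sPC I] by blast
    then show ?thesis by simp
  qed
  have ec: "pconst s * pvar s - 1 \<in> Q" if "s \<in> S" "s \<notin> p" for s
  proof -
    let ?e = "pconst s * pvar s"
    have ePC: "?e \<in> PC S" using that pvar_PC[of s S] subr_mult[OF sPC] by simp
    have "pvar s * (pconst (s ^ 2) * pvar s - pconst s) \<in> Q"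
      using g1 g2 that pvar_PC[of s S] tideal_lmult[OF I] by blast
    moreover have "pvar s * (pconst (s ^ 2) * pvar s - pconst s) = ?e * (?e - 1)"
      by (simp add: pconst_pow power2_eq_square pconst_mult algebra_simps)
    ultimately have "?e * (?e - 1) \<in> Q" by simp
    moreover have "?e \<notin> Q"
    proof
      assume "?e \<in> Q"
      then have "pconst s * ?e \<in> Q" using tideal_lmult[OF I] by simp
      moreover have "pconst s * ?e = pconst (s ^ 2) * pvar s" by (simp add: pconst_pow power2_eq_square pconst_mult mult.assoc)
      ultimately have "pconst (s ^ 2) * pvar s - (pconst (s ^ 2) * pvar s - pconst s) \<in> Q"
        using g2[OF that(1)] tideal_diff[OF sPC I] by metis
      then have "pconst s \<in> Q" by simp
      then show False using that by (simp add: p_def)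
    qed
    moreover have "?e - 1 \<in> PC S" using ePC subr_diff[OF sPC] subr_one[OF sPC] by blast
    ultimately show ?thesis using Q ePC unfolding tprime_def by blast
  qed
  define V where "V = vars f - p"
  define N where "N = degb f"
  define D where "D = (\<Prod>s\<in>V. s ^ N)"
  have finV: "finite V" by (simp add: V_def)
  have VS: "V \<subseteq> S" using vars_PC[OF f] by (auto simp: V_def)
  have M: "pconst D * Poly_Mapping.single m c - pconst (c * mv V N m) \<in> Q" if m: "m \<in> Poly_Mapping.keys f" for m c
  proof (cases "Poly_Mapping.keys m \<subseteq> V")
    case True
    have X: "(\<Prod>s\<in>Poly_Mapping.keys m. pvar s ^ Poly_Mapping.lookup m s) = (\<Prod>s\<in>V. pvar s ^ Poly_Mapping.lookup m s)"
      using True finV by (intro prod.mono_neutral_left) (auto simp: not_in_keys_iff_lookup_eq_zero)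
    have le: "Poly_Mapping.lookup m s \<le> N" for s using lookup_le_degb[OF m] by (simp add: N_def)
    have "pconst D * (\<Prod>s\<in>V. pvar s ^ Poly_Mapping.lookup m s)
        = (\<Prod>s\<in>V. pconst (s ^ (N - Poly_Mapping.lookup m s)) * (pconst s * pvar s) ^ Poly_Mapping.lookup m s)"
      unfolding D_def pconst_prod prod.distrib[symmetric]
    proof (rule prod.cong[OF refl])
      fix s
      have "N = (N - Poly_Mapping.lookup m s) + Poly_Mapping.lookup m s" using le[of s] by simp
      then have "pconst (s ^ N) = pconst (s ^ (N - Poly_Mapping.lookup m s)) * pconst s ^ Poly_Mapping.lookup m s"
        by (metis pconst_mult pconst_pow power_add)
      then show "pconst (s ^ N) * pvar s ^ Poly_Mapping.lookup m s =
          pconst (s ^ (N - Poly_Mapping.lookup m s)) * (pconst s * pvar s) ^ Poly_Mapping.lookup m s"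
        by (simp add: power_mult_distrib mult.assoc)
    qed
    moreover have "(\<Prod>s\<in>V. pconst (s ^ (N - Poly_Mapping.lookup m s)) * (pconst s * pvar s) ^ Poly_Mapping.lookup m s)
        - (\<Prod>s\<in>V. pconst (s ^ (N - Poly_Mapping.lookup m s))) \<in> Q"
    proof (rule cong_prod[OF sPC I])
      fix s assume s: "s \<in> V"
      then have sS: "s \<in> S" and snp: "s \<notin> p" using VS by (auto simp: V_def)
      have ePC: "pconst s * pvar s \<in> PC S" using sS pvar_PC[of s S] subr_mult[OF sPC] by simp
      show "pconst (s ^ (N - Poly_Mapping.lookup m s)) * (pconst s * pvar s) ^ Poly_Mapping.lookup m s \<in> PC S"
        using ePC subr_mult[OF sPC] subr_pow[OF sPC] by simp
      show "pconst (s ^ (N - Poly_Mapping.lookup m s)) \<in> PC S" by simp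
      have "(pconst s * pvar s) ^ Poly_Mapping.lookup m s - 1 \<in> Q"
        using cong_pow1[OF sPC I ePC ec[OF sS snp]] .
      then have "pconst (s ^ (N - Poly_Mapping.lookup m s)) * ((pconst s * pvar s) ^ Poly_Mapping.lookup m s - 1) \<in> Q"
        using tideal_lmult[OF I] by simp
      then show "pconst (s ^ (N - Poly_Mapping.lookup m s)) * (pconst s * pvar s) ^ Poly_Mapping.lookup m s
          - pconst (s ^ (N - Poly_Mapping.lookup m s)) \<in> Q"
        by (simp add: algebra_simps)
    qed
    ultimately have "pconst D * (\<Prod>s\<in>V. pvar s ^ Poly_Mapping.lookup m s) - pconst (mv V N m) \<in> Q"
      using True by (simp add: mv_def pconst_prod)
    then have "pconst c * (pconst D * (\<Prod>s\<in>V. pvar s ^ Poly_Mapping.lookup m s) - pconst (mv V N m)) \<in> Q"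
      using tideal_lmult[OF I] by simp
    then show ?thesis
      by (simp add: mono_factor[of m c] X pconst_mult algebra_simps)
  next
    case False
    then obtain s where s: "s \<in> Poly_Mapping.keys m" "s \<notin> V" by blast
    have sv: "s \<in> vars f" using s m by (auto simp: vars_def)
    then have sS: "s \<in> S" using vars_PC[OF f] by blast
    have sp: "s \<in> p" using sv s(2) by (simp add: V_def)
    have "pvar s ^ Poly_Mapping.lookup m s \<in> Q"
      using s(1) pv[OF sS sp] by (intro tideal_pow_mem[OF I sPC]) (auto simp: in_keys_iff)
    then have "(\<Prod>s\<in>Poly_Mapping.keys m. pvar s ^ Poly_Mapping.lookup m s) \<in> Q"
      using s(1) vars_PC[OF f] sv m
      by (intro tideal_prod_mem[OF sPC I, of _ _ s])
         (auto simp: vars_def intro!: subr_pow[OF sPC] pvar_PC)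
    then have "Poly_Mapping.single m c \<in> Q"
      unfolding mono_factor[of m c] using tideal_lmult[OF I] by simp
    then have "pconst D * Poly_Mapping.single m c \<in> Q" using tideal_lmult[OF I] by simp
    moreover have "mv V N m = 0" using False by (simp add: mv_def)
    ultimately show ?thesis by simp
  qed
  have diff: "pconst D * f - pconst (Psi V N f) \<in> Q"
  proof -
    have "pconst D * f - pconst (Psi V N f) =
      (\<Sum>m\<in>Poly_Mapping.keys f. pconst D * Poly_Mapping.single m (Poly_Mapping.lookup f m)
         - pconst (Poly_Mapping.lookup f m * mv V N m))"
      apply (subst (1) pm_expand[of f])
      by (simp add: Psi_def pconst_sum sum_distrib_left sum_subtractf)
    also have "\<dots> \<in> Q" by (intro tideal_sum[OF I] M)
    finally show ?thesis .
  qed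
  have DQ: "pconst D \<notin> Q"
  proof -
    have "D \<notin> p" unfolding D_def
      by (rule tprime_prod_notin[OF p]) (rule tprime_pow_notin[OF p], auto simp: V_def)
    then show ?thesis by (simp add: p_def)
  qed
  have Zf: "Z p f \<longleftrightarrow> pconst (Psi V N f) \<in> Q" by (simp add: Z_def V_def N_def p_def)
  show ?thesis
  proof
    assume "f \<in> Q"
    then have "pconst D * f \<in> Q" using tideal_lmult[OF I] by simp
    then have "pconst D * f - (pconst D * f - pconst (Psi V N f)) \<in> Q"
      using diff tideal_diff[OF sPC I] by blast
    then show "Z {r. pconst r \<in> Q} f" using Zf by (simp add: p_def)
  next
    assume "Z {r. pconst r \<in> Q} f"
    then have "pconst (Psi V N f) \<in> Q" using Zf by (simp add: p_def)
    then have "(pconst D * f - pconst (Psi V N f)) + pconst (Psi V N f) \<in> Q"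
      using diff tideal_add[OF I] by blast
    then have "pconst D * f \<in> Q" by simp
    then show "f \<in> Q" using Q f DQ unfolding tprime_def by auto
  qed
qed



definition sumid :: "'b::comm_ring_1 set \<Rightarrow> 'b \<Rightarrow> 'b set" where
  "sumid M x = {m + c * x | m c. m \<in> M}"

lemma sumid_tideal: assumes "tideal UNIV M" shows "tideal UNIV (sumid M x)"
  unfolding tideal_def
proof (intro conjI ballI)
  show "0 \<in> sumid M x" unfolding sumid_def using assms tideal_zero
    by (metis (mono_tags, lifting) add_0 mem_Collect_eq mult_zero_left)
next
  fix a b assume "a \<in> sumid M x" "b \<in> sumid M x"
  then obtain m1 c1 m2 c2 where "a = m1 + c1 * x" "b = m2 + c2 * x" "m1 \<in> M" "m2 \<in> M"
    unfolding sumid_def by blast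
  then show "a + b \<in> sumid M x" unfolding sumid_def
    using tideal_add[OF assms, of m1 m2]
    by (intro CollectI exI[of _ "m1 + m2"] exI[of _ "c1 + c2"]) (simp add: algebra_simps)
next
  fix c a assume "a \<in> sumid M x"
  then obtain m1 c1 where "a = m1 + c1 * x" "m1 \<in> M" unfolding sumid_def by blast
  then show "c * a \<in> sumid M x" unfolding sumid_def
    using tideal_lmult[OF assms, of c m1]
    by (intro CollectI exI[of _ "c * m1"] exI[of _ "c * c1"]) (simp add: algebra_simps)
qed simp

lemma sumid_sup: "tideal UNIV M \<Longrightarrow> M \<subseteq> sumid M x"
  unfolding sumid_def by (force intro: exI[of _ 0])

lemma sumid_mem: "tideal UNIV M \<Longrightarrow> x \<in> sumid M x"
  unfolding sumid_def using tideal_zero by (force intro: exI[of _ 1])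

lemma exists_prime_avoiding:
  fixes r :: "'a::comm_ring_1"
  assumes nn: "\<forall>n. r ^ n \<noteq> 0"
  shows "\<exists>p. tprime UNIV p \<and> r \<notin> p"
proof -
  define F where "F = {J :: 'a set. tideal UNIV J \<and> (\<forall>n. r ^ n \<notin> J)}"
  have "\<exists>M\<in>F. \<forall>X\<in>F. M \<subseteq> X \<longrightarrow> X = M"
  proof (rule Zorn_Lemma2, intro ballI)
    fix C assume C: "C \<in> chains F"
    show "\<exists>U\<in>F. \<forall>X\<in>C. X \<subseteq> U"
    proof (cases "C = {}")
      case True
      have "{0} \<in> F" using nn by (auto simp: F_def tideal_def)
      then show ?thesis using True by blast
    next
      case False
      have CF: "C \<subseteq> F" and ch: "\<forall>A\<in>C. \<forall>B\<in>C. A \<subseteq> B \<or> B \<subseteq> A"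
        using C by (auto simp: chains_def chain_subset_def)
      have "tideal UNIV (\<Union>C)" unfolding tideal_def
      proof (intro conjI ballI)
        obtain J where "J \<in> C" using False by blast
        then show "0 \<in> \<Union>C" using CF by (auto simp: F_def tideal_def)
      next
        fix x y assume "x \<in> \<Union>C" "y \<in> \<Union>C"
        then obtain A B where AB: "A \<in> C" "B \<in> C" "x \<in> A" "y \<in> B" by blast
        then show "x + y \<in> \<Union>C"
        proof (cases "A \<subseteq> B")
          case True then show ?thesis using AB CF tideal_add[of UNIV B x y] by (auto simp: F_def)
        next
          case False then have "B \<subseteq> A" using ch AB by blast
          then show ?thesis using AB CF tideal_add[of UNIV A x y] by (auto simp: F_def)
        qed
      next
        fix c x assume "x \<in> \<Union>C"
        then obtain A where "A \<in> C" "x \<in> A" by blast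
        then show "c * x \<in> \<Union>C" using CF tideal_lmult[of UNIV A c x] by (auto simp: F_def)
      qed simp
      moreover have "\<forall>n. r ^ n \<notin> \<Union>C" using CF by (auto simp: F_def)
      ultimately show ?thesis by (intro bexI[of _ "\<Union>C"]) (auto simp: F_def)
    qed
  qed
  then obtain M where MF: "M \<in> F" and Mmax: "\<And>X. X \<in> F \<Longrightarrow> M \<subseteq> X \<Longrightarrow> X = M" by blast
  have MI: "tideal UNIV M" and Mr: "\<And>n. r ^ n \<notin> M" using MF by (auto simp: F_def)
  have out: "\<exists>n. r ^ n \<in> sumid M x" if "x \<notin> M" for x
  proof (rule ccontr)
    assume "\<not> ?thesis"
    then have "sumid M x \<in> F" using sumid_tideal[OF MI] by (auto simp: F_def)
    then have "sumid M x = M" using Mmax sumid_sup[OF MI] by blast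
    then show False using sumid_mem[OF MI, of x] that by simp
  qed
  have "tprime UNIV M" unfolding tprime_def
  proof (intro conjI ballI impI)
    show "tideal UNIV M" by (rule MI)
    show "1 \<notin> M" using Mr[of 0] by simp
  next
    fix x y assume xy: "x * y \<in> M"
    show "x \<in> M \<or> y \<in> M"
    proof (rule ccontr)
      assume "\<not> (x \<in> M \<or> y \<in> M)"
      then obtain n k where n: "r ^ n \<in> sumid M x" and k: "r ^ k \<in> sumid M y" using out by blast
      then obtain m1 c1 m2 c2 where e: "r ^ n = m1 + c1 * x" "r ^ k = m2 + c2 * y" "m1 \<in> M" "m2 \<in> M"
        unfolding sumid_def by blast
      have "r ^ (n + k) = m1 * (m2 + c2 * y) + m2 * (c1 * x) + (c1 * c2) * (x * y)"
        by (simp add: power_add e algebra_simps)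
      also have "\<dots> \<in> M"
        using e(3,4) xy MI by (intro tideal_add[OF MI]) (auto intro: tideal_rmult tideal_lmult)
      finally show False using Mr by blast
    qed
  qed
  moreover have "r \<notin> M" using Mr[of 1] by simp
  ultimately show ?thesis by blast
qed



definition pim :: "'a::comm_ring_1 set \<Rightarrow> (('a \<Rightarrow>\<^sub>0 nat) \<Rightarrow>\<^sub>0 'a) \<Rightarrow> (('a \<Rightarrow>\<^sub>0 nat) \<Rightarrow>\<^sub>0 'a) set" where
  "pim S f = pinv_ideal S +>\<^bsub>poly_ring_on S\<^esub> f"

lemma eta_pim: "eta S r = pim S (pconst r)" by (simp add: eta_def pim_def)

lemma cring_P: "cring (poly_ring_on S)"
  unfolding poly_ring_eq by (rule tcr_cring[OF subr_PC])

lemma ring_P: "ring (poly_ring_on S)" using cring_P cring.axioms(1) by blast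

lemma gens_PC: "{pconst s * pvar s ^ 2 - pvar s | s. s \<in> S} \<union> {pconst (s ^ 2) * pvar s - pconst s | s. s \<in> S} \<subseteq> PC S"
proof (intro Un_least subsetI)
  fix x assume "x \<in> {pconst s * pvar s ^ 2 - pvar s | s. s \<in> S}"
  then obtain s where "s \<in> S" "x = pconst s * pvar s ^ 2 - pvar s" by blast
  then show "x \<in> PC S" using gen1_PC by simp
next
  fix x assume "x \<in> {pconst (s ^ 2) * pvar s - pconst s | s. s \<in> S}"
  then obtain s where "s \<in> S" "x = pconst (s ^ 2) * pvar s - pconst s" by blast
  then show "x \<in> PC S" using gen2_PC by simp
qed

lemma ideal_I: "ideal (pinv_ideal S) (poly_ring_on S)"
  unfolding pinv_ideal_def
  by (rule ring.genideal_ideal[OF ring_P]) (unfold poly_ring_eq tcr_simps, rule gens_PC)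

lemma I_PC: "pinv_ideal S \<subseteq> PC S"
  using ideal_I[of S] additive_subgroup.a_subset[OF ideal.axioms(1)] by (force simp: poly_ring_eq)

lemma cring_A: "cring (pinv_loc S)"
  unfolding pinv_loc_def by (rule ideal.quotient_is_cring[OF ideal_I cring_P])

lemma pim_hom: "pim S \<in> ring_hom (poly_ring_on S) (pinv_loc S)"
proof -
  have "(a_r_coset (poly_ring_on S) (pinv_ideal S)) \<in> ring_hom (poly_ring_on S) (pinv_loc S)"
    unfolding pinv_loc_def by (rule ideal.rcos_ring_hom[OF ideal_I])
  moreover have "pim S = a_r_coset (poly_ring_on S) (pinv_ideal S)" by (simp add: pim_def fun_eq_iff)
  ultimately show ?thesis by simp
qed

lemma pim_hom_ring: "ring_hom_ring (poly_ring_on S) (pinv_loc S) (pim S)"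
proof -
  have "ring_hom_ring (poly_ring_on S) (poly_ring_on S Quot pinv_ideal S) (a_r_coset (poly_ring_on S) (pinv_ideal S))"
    by (rule ideal.rcos_ring_hom_ring[OF ideal_I])
  moreover have "pim S = a_r_coset (poly_ring_on S) (pinv_ideal S)" by (simp add: pim_def fun_eq_iff)
  ultimately show ?thesis by (simp add: pinv_loc_def)
qed

lemma carrier_A: "carrier (pinv_loc S) = pim S ` PC S"
  unfolding pinv_loc_def FactRing_def A_RCOSETS_def' pim_def by (auto simp: poly_ring_eq)

lemma zero_A: "zero (pinv_loc S) = pinv_ideal S" by (simp add: pinv_loc_def FactRing_def)
lemma one_A: "one (pinv_loc S) = pim S 1" by (simp add: pinv_loc_def FactRing_def pim_def poly_ring_eq)

lemma pim_PC: "f \<in> PC S \<Longrightarrow> pim S f \<in> carrier (pinv_loc S)"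
  using carrier_A by blast

lemma pim_mult: "f \<in> PC S \<Longrightarrow> g \<in> PC S \<Longrightarrow> pim S (f * g) = pim S f \<otimes>\<^bsub>pinv_loc S\<^esub> pim S g"
  using ring_hom_mult[OF pim_hom, where x=f and y=g] by (simp add: poly_ring_eq)
lemma pim_add: "f \<in> PC S \<Longrightarrow> g \<in> PC S \<Longrightarrow> pim S (f + g) = pim S f \<oplus>\<^bsub>pinv_loc S\<^esub> pim S g"
  using ring_hom_add[OF pim_hom, where x=f and y=g] by (simp add: poly_ring_eq)

lemma pim_eq: assumes "f \<in> PC S" "g \<in> PC S" shows "pim S f = pim S g \<longleftrightarrow> f - g \<in> pinv_ideal S"
proof -
  have "a_minus (poly_ring_on S) f g \<in> pinv_ideal S \<longleftrightarrow> pim S f = pim S g"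
    unfolding pim_def using assms
    by (intro ring.quotient_eq_iff_same_a_r_cos[OF ring_P ideal_I]) (auto simp: poly_ring_eq)
  moreover have "a_minus (poly_ring_on S) f g = f - g"
    using assms by (simp add: poly_ring_eq tcr_a_minus[OF subr_PC])
  ultimately show ?thesis by simp
qed

lemma pim_in_I: "f \<in> pinv_ideal S \<Longrightarrow> pim S f = pinv_ideal S"
  unfolding pim_def by (rule ring.a_rcos_zero[OF ring_P ideal_I])

lemma zero_I: "0 \<in> pinv_ideal S"
proof -
  have "zero (poly_ring_on S) \<in> pinv_ideal S"
    by (rule additive_subgroup.zero_closed[OF ideal.axioms(1)[OF ideal_I]])
  then show ?thesis by (simp add: poly_ring_eq)
qed

lemma pim_zero: "pim S 0 = pinv_ideal S"
  by (rule pim_in_I[OF zero_I])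

lemma pim_eq_zero: "f \<in> PC S \<Longrightarrow> pim S f = pinv_ideal S \<longleftrightarrow> f \<in> pinv_ideal S"
  using pim_eq[of f S 0] pim_zero[of S] by (simp add: subr_zero[OF subr_PC[of S]])

definition Qof :: "'a::comm_ring_1 set \<Rightarrow> (('a \<Rightarrow>\<^sub>0 nat) \<Rightarrow>\<^sub>0 'a) set set \<Rightarrow> (('a \<Rightarrow>\<^sub>0 nat) \<Rightarrow>\<^sub>0 'a) set" where
  "Qof S q = {f \<in> PC S. pim S f \<in> q}"

lemma Qof_tprime: assumes q: "q \<in> Spec (pinv_loc S)"
  shows "tprime (PC S) (Qof S q)" "pinv_ideal S \<subseteq> Qof S q"
proof -
  have P: "primeideal q (pinv_loc S)" using q by (simp add: Spec_def)
  have Iq: "ideal q (pinv_loc S)" using P primeideal.axioms(1) by blast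
  have "ideal {r \<in> carrier (poly_ring_on S). pim S r \<in> q} (poly_ring_on S)"
    by (rule ring_hom_ring.ideal_vimage[OF pim_hom_ring Iq])
  then have ti: "tideal (PC S) (Qof S q)"
    using tcr_ideal_iff[OF subr_PC[of S]] by (simp add: Qof_def poly_ring_eq)
  have "1 \<notin> Qof S q"
  proof
    assume "1 \<in> Qof S q"
    then have "one (pinv_loc S) \<in> q" by (simp add: Qof_def one_A)
    then have "q = carrier (pinv_loc S)" by (rule ideal.one_imp_carrier[OF Iq])
    then show False using primeideal.I_notcarr[OF P] by simp
  qed
  moreover have "x \<in> Qof S q \<or> y \<in> Qof S q" if "x \<in> PC S" "y \<in> PC S" "x * y \<in> Qof S q" for x y
    using that primeideal.I_prime[OF P, of "pim S x" "pim S y"] pim_mult[of x S y] pim_PC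
    by (auto simp: Qof_def)
  ultimately show "tprime (PC S) (Qof S q)" using ti by (simp add: tprime_def)
  have "zero (pinv_loc S) \<in> q"
    using additive_subgroup.zero_closed[OF ideal.axioms(1)[OF Iq]] by simp
  then show "pinv_ideal S \<subseteq> Qof S q"
    using I_PC pim_in_I zero_A by (fastforce simp: Qof_def)
qed

lemma Qof_eta: "eta S -` q = {r. pconst r \<in> Qof S q}"
  by (auto simp: Qof_def eta_pim)

lemma Qof_char: assumes q: "q \<in> Spec (pinv_loc S)" and f: "f \<in> PC S"
  shows "pim S f \<in> q \<longleftrightarrow> Z (eta S -` q) f"
proof -
  have "f \<in> Qof S q \<longleftrightarrow> Z {r. pconst r \<in> Qof S q} f"
    using Qof_tprime[OF q] pinv_ideal_gens[of _ S] f by (intro char_lemma) auto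
  then show ?thesis using f by (simp add: Qof_def Qof_eta)
qed

lemma q_sub: "q \<in> Spec (pinv_loc S) \<Longrightarrow> q \<subseteq> carrier (pinv_loc S)"
  unfolding Spec_def using primeideal.axioms(1) ideal.axioms(1) additive_subgroup.a_subset by blast

lemma contr_Spec: assumes q: "q \<in> Spec (pinv_loc S)" shows "eta S -` q \<in> Spec (tc_ring :: 'a::comm_ring_1 ring)"
proof -
  have "tprime UNIV (eta S -` q)" unfolding Qof_eta by (rule contract_tprime[OF Qof_tprime(1)[OF q]])
  then show ?thesis by (simp add: Spec_def tc_ring_eq tcr_prime_iff[OF subr_UNIV])
qed

lemma eta_inj: assumes q1: "q1 \<in> Spec (pinv_loc S)" and q2: "q2 \<in> Spec (pinv_loc S)"
  and e: "eta S -` q1 = eta S -` q2" shows "q1 = q2"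
proof -
  have "x \<in> q2" if H: "x \<in> q1" "q1 \<in> Spec (pinv_loc S)" "q2 \<in> Spec (pinv_loc S)" "eta S -` q1 = eta S -` q2"
    for x q1 q2
  proof -
    obtain f where f: "f \<in> PC S" "x = pim S f" using q_sub[OF H(2)] H(1) carrier_A[of S] by blast
    then show ?thesis using Qof_char[OF H(2) f(1)] Qof_char[OF H(3) f(1)] H by simp
  qed
  then show ?thesis using q1 q2 e by blast
qed

lemma eta_surj: assumes p: "p \<in> Spec (tc_ring :: 'a::comm_ring_1 ring)"
  shows "\<exists>q\<in>Spec (pinv_loc S). eta S -` q = p"
proof -
  have tp: "tprime UNIV p" using p by (simp add: Spec_def tc_ring_eq tcr_prime_iff[OF subr_UNIV])
  define q where "q = pim S ` Zset S p"
  have IZ: "pinv_ideal S \<subseteq> Zset S p" by (rule pinv_ideal_sub_Zset[OF tp])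
  have ZT: "tprime (PC S) (Zset S p)" by (rule Zset_tprime[OF tp])
  have Zsub: "Zset S p \<subseteq> PC S" by (auto simp: Zset_def)
  have memq: "pim S f \<in> q \<longleftrightarrow> f \<in> Zset S p" if f: "f \<in> PC S" for f
  proof
    assume "pim S f \<in> q"
    then obtain g where g: "g \<in> Zset S p" "pim S f = pim S g" by (auto simp: q_def)
    then have "f - g \<in> pinv_ideal S" using pim_eq[OF f] Zsub by blast
    then have "f - g \<in> Zset S p" using IZ by blast
    moreover have "tideal (PC S) (Zset S p)" using ZT by (simp add: tprime_def)
    ultimately have "(f - g) + g \<in> Zset S p" using g(1) tideal_add by blast
    then show "f \<in> Zset S p" by simp
  qed (simp add: q_def)
  have idZ: "ideal (Zset S p) (poly_ring_on S)"
    using ZT tcr_ideal_iff[OF subr_PC[of S]] by (simp add: tprime_def poly_ring_eq)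
  have "ideal q (pinv_loc S)"
  proof -
    have "ideal (a_r_coset (poly_ring_on S) (pinv_ideal S) ` Zset S p) (poly_ring_on S Quot pinv_ideal S)"
      by (rule ring.ring_ideal_imp_quot_ideal[OF ring_P ideal_I idZ])
    moreover have "pim S = a_r_coset (poly_ring_on S) (pinv_ideal S)" by (simp add: pim_def fun_eq_iff)
    ultimately show ?thesis by (simp add: q_def pinv_loc_def)
  qed
  moreover have "carrier (pinv_loc S) \<noteq> q"
  proof
    assume "carrier (pinv_loc S) = q"
    then have "pim S 1 \<in> q" using pim_PC[of 1 S] subr_one[OF subr_PC[of S]] by simp
    then have "(1 :: ('a \<Rightarrow>\<^sub>0 nat) \<Rightarrow>\<^sub>0 'a) \<in> Zset S p" using memq[of 1] subr_one[OF subr_PC[of S]] by simp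
    then show False using ZT by (simp add: tprime_def)
  qed
  moreover have "a \<in> q \<or> b \<in> q" if H: "a \<in> carrier (pinv_loc S)" "b \<in> carrier (pinv_loc S)"
    "a \<otimes>\<^bsub>pinv_loc S\<^esub> b \<in> q" for a b
  proof -
    have "a \<in> pim S ` PC S" "b \<in> pim S ` PC S" using H(1,2) carrier_A[of S] by auto
    then obtain f g where fg: "f \<in> PC S" "g \<in> PC S" "a = pim S f" "b = pim S g" by (auto simp: image_iff)
    then have "pim S (f * g) \<in> q" using H(3) pim_mult[of f S g] by simp
    moreover have "f * g \<in> PC S" using fg subr_mult[OF subr_PC[of S]] by blast
    ultimately have "f * g \<in> Zset S p" using memq[of "f * g"] by simp
    then have "f \<in> Zset S p \<or> g \<in> Zset S p" using ZT fg unfolding tprime_def by blast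
    then show ?thesis using fg memq[of f] memq[of g] by simp
  qed
  ultimately have "primeideal q (pinv_loc S)" by (intro primeidealI cring_A) blast+
  moreover have "eta S -` q = p"
  proof -
    have "r \<in> eta S -` q \<longleftrightarrow> r \<in> p" for r
      using memq[of "pconst r"] Z_pconst[OF tp, of r] by (simp add: eta_pim Zset_def)
    then show ?thesis by blast
  qed
  ultimately show ?thesis by (auto simp: Spec_def)
qed



lemma top_zar: assumes R: "cring R" shows "topspace (zariski R) = Spec R"
proof -
  have "q \<in> \<Union>{Spec R - Vset R J | J. ideal J R}" if q: "q \<in> Spec R" for q
  proof -
    have "ideal (carrier R) R" using R cring.axioms(1) ring.oneideal by blast
    moreover have "q \<notin> Vset R (carrier R)"
    proof
      assume "q \<in> Vset R (carrier R)"
      then have "carrier R \<subseteq> q" by (simp add: Vset_def)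
      moreover have "q \<subseteq> carrier R" using q unfolding Spec_def
        using primeideal.axioms(1) ideal.axioms(1) additive_subgroup.a_subset by blast
      ultimately have "q = carrier R" by blast
      then show False using q primeideal.I_notcarr by (force simp: Spec_def)
    qed
    ultimately show ?thesis using q by blast
  qed
  then show ?thesis unfolding zariski_def topology_generated_by_topspace by blast
qed

lemma top_flat: assumes R: "cring R" shows "topspace (flat_top R) = Spec R"
proof -
  have rR: "ring R" using R cring.axioms(1) by blast
  let ?J = "genideal R {zero R}"
  have J: "fg_ideal R ?J" unfolding fg_ideal_def
    using ring.genideal_ideal[OF rR, of "{zero R}"] ring.ring_simprules(2)[OF rR] by blast
  have "q \<in> Vset R ?J" if q: "q \<in> Spec R" for q
  proof -
    have I: "ideal q R" using q primeideal.axioms(1) by (force simp: Spec_def)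
    have "zero R \<in> q" using additive_subgroup.zero_closed[OF ideal.axioms(1)[OF I]] by simp
    then have "?J \<subseteq> q" using ring.genideal_minimal[OF rR I] by blast
    then show ?thesis using q by (simp add: Vset_def)
  qed
  then have "Spec R \<subseteq> \<Union>{Vset R J | J. fg_ideal R J}" using J by blast
  moreover have "\<Union>{Vset R J | J. fg_ideal R J} \<subseteq> Spec R" by (auto simp: Vset_def)
  ultimately show ?thesis unfolding flat_top_def topology_generated_by_topspace by blast
qed

lemma V_single: assumes R: "cring R" and x: "x \<in> carrier R"
  shows "Vset R (genideal R {x}) = {q \<in> Spec R. x \<in> q}"
proof -
  have rR: "ring R" using R cring.axioms(1) by blast
  have "genideal R {x} \<subseteq> q \<longleftrightarrow> x \<in> q" if q: "q \<in> Spec R" for q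
  proof
    assume "genideal R {x} \<subseteq> q"
    then show "x \<in> q" using ring.genideal_self'[OF rR x] by blast
  next
    assume "x \<in> q"
    moreover have I: "ideal q R" using q primeideal.axioms(1) by (force simp: Spec_def)
    ultimately show "genideal R {x} \<subseteq> q" using ring.genideal_minimal[OF rR I] by blast
  qed
  then show ?thesis by (auto simp: Vset_def)
qed

lemma clopen_gen:
  assumes R: "cring R" and x: "x \<in> carrier R" and y: "y \<in> carrier R"
    and xy: "\<And>q. q \<in> Spec R \<Longrightarrow> x \<in> q \<longleftrightarrow> y \<notin> q"
    and E: "E = {q \<in> Spec R. x \<in> q}"
  shows "closedin (zariski R) E \<and> openin (zariski R) E \<and> closedin (flat_top R) E \<and> openin (flat_top R) E"
proof -
  have rR: "ring R" using R cring.axioms(1) by blast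
  have Ix: "ideal (genideal R {x}) R" "ideal (genideal R {y}) R"
    using ring.genideal_ideal[OF rR] x y by auto
  have Fx: "fg_ideal R (genideal R {x})" "fg_ideal R (genideal R {y})"
    unfolding fg_ideal_def using Ix x y by blast+
  have E1: "E = Vset R (genideal R {x})" using V_single[OF R x] E by simp
  have E2: "Spec R - E = Vset R (genideal R {y})" using V_single[OF R y] E xy by auto
  have E3: "E = Spec R - Vset R (genideal R {y})" using E2 E by auto
  have z1: "openin (zariski R) (Spec R - Vset R (genideal R {x}))"
    unfolding zariski_def by (rule topology_generated_by_Basis) (use Ix in blast)
  have z2: "openin (zariski R) (Spec R - Vset R (genideal R {y}))"
    unfolding zariski_def by (rule topology_generated_by_Basis) (use Ix in blast)
  have f1: "openin (flat_top R) (Vset R (genideal R {x}))"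
    unfolding flat_top_def by (rule topology_generated_by_Basis) (use Fx in blast)
  have f2: "openin (flat_top R) (Vset R (genideal R {y}))"
    unfolding flat_top_def by (rule topology_generated_by_Basis) (use Fx in blast)
  have sub: "E \<subseteq> Spec R" using E by blast
  show ?thesis
    unfolding closedin_def top_zar[OF R] top_flat[OF R]
    using z1 z2 f1 f2 sub E1 E2 E3 by simp
qed

lemma (in cring) ptwise_inv_unique:
  assumes c: "a \<in> carrier R" "b \<in> carrier R" "c \<in> carrier R"
    and h: "a \<otimes> a \<otimes> b = a" "a \<otimes> b \<otimes> b = b" "a \<otimes> a \<otimes> c = a" "a \<otimes> c \<otimes> c = c"
  shows "b = c"
proof -
  have e1: "(a \<otimes> c) \<otimes> (a \<otimes> b) = a \<otimes> b"
  proof -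
    have "(a \<otimes> c) \<otimes> (a \<otimes> b) = (a \<otimes> a \<otimes> c) \<otimes> b" using c by (simp add: m_ac)
    then show ?thesis using h by simp
  qed
  have e2: "(a \<otimes> b) \<otimes> (a \<otimes> c) = a \<otimes> c"
  proof -
    have "(a \<otimes> b) \<otimes> (a \<otimes> c) = (a \<otimes> a \<otimes> b) \<otimes> c" using c by (simp add: m_ac)
    then show ?thesis using h by simp
  qed
  have ef: "a \<otimes> b = a \<otimes> c" using e1 e2 c by (metis m_closed m_comm)
  have "b = (a \<otimes> b) \<otimes> b" using h c by (simp add: m_ac)
  also have "\<dots> = (a \<otimes> c) \<otimes> b" using ef by simp
  also have "\<dots> = c \<otimes> (a \<otimes> b)" using c by (simp add: m_ac)
  also have "\<dots> = c \<otimes> (a \<otimes> c)" using ef by simp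
  also have "\<dots> = c" using h c by (simp add: m_ac)
  finally show ?thesis .
qed

lemma PC_induct:
  assumes c: "\<And>c. pconst c \<in> E" and v: "\<And>s. s \<in> S \<Longrightarrow> pvar s \<in> E"
    and add: "\<And>x y. x \<in> E \<Longrightarrow> y \<in> E \<Longrightarrow> x + y \<in> E"
    and mul: "\<And>x y. x \<in> E \<Longrightarrow> y \<in> E \<Longrightarrow> x * y \<in> E"
    and f: "f \<in> PC S"
  shows "f \<in> E"
proof -
  have pw: "x ^ n \<in> E" if "x \<in> E" for x n
  proof (induction n)
    case 0 then show ?case using c[of 1] by simp
  next
    case (Suc n) then show ?case using mul[OF that Suc] by simp
  qed
  have pr: "prod g K \<in> E" if "\<And>k. k \<in> K \<Longrightarrow> g k \<in> E" for g and K :: "'x set"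
    using that
  proof (induction K rule: infinite_finite_induct)
    case (infinite K) then show ?case using c[of 1] by simp
  next
    case empty then show ?case using c[of 1] by simp
  next
    case (insert x F) then show ?case using mul by simp
  qed
  have sm: "sum g K \<in> E" if "\<And>k. k \<in> K \<Longrightarrow> g k \<in> E" for g and K :: "'y set"
    using that
  proof (induction K rule: infinite_finite_induct)
    case (infinite K) then show ?case using c[of 0] by simp
  next
    case empty then show ?case using c[of 0] by simp
  next
    case (insert x F) then show ?case using add by simp
  qed
  have "Poly_Mapping.single m (Poly_Mapping.lookup f m) \<in> E" if m: "m \<in> Poly_Mapping.keys f" for m
  proof -
    have "Poly_Mapping.keys m \<subseteq> S" using f m by (auto simp: PC_def)
    then have "(\<Prod>s\<in>Poly_Mapping.keys m. pvar s ^ Poly_Mapping.lookup m s) \<in> E"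
      by (intro pr pw v) auto
    then show ?thesis unfolding mono_factor[of m] using mul c by blast
  qed
  then have "(\<Sum>m\<in>Poly_Mapping.keys f. Poly_Mapping.single m (Poly_Mapping.lookup f m)) \<in> E"
    by (intro sm)
  then show ?thesis using pm_expand[of f] by simp
qed



lemma eta_hom: "eta S \<in> ring_hom (tc_ring :: 'a::comm_ring_1 ring) (pinv_loc S)"
proof -
  have "pconst \<in> ring_hom (tc_ring :: 'a ring) (poly_ring_on S)"
    by (rule ring_hom_memI) (auto simp: tc_ring_eq poly_ring_eq pconst_mult pconst_add)
  then have "pim S \<circ> pconst \<in> ring_hom (tc_ring :: 'a ring) (pinv_loc S)"
    by (rule ring_hom_trans[OF _ pim_hom])
  moreover have "pim S \<circ> pconst = eta S" by (simp add: fun_eq_iff eta_pim)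
  ultimately show ?thesis by simp
qed

lemma epi:
  fixes T :: "'c ring" and S :: "'a::comm_ring_1 set"
  assumes T: "cring T" and g: "g \<in> ring_hom (pinv_loc S) T" and h: "h \<in> ring_hom (pinv_loc S) T"
    and gh: "\<forall>r. g (eta S r) = h (eta S r)"
  shows "\<forall>x\<in>carrier (pinv_loc S). g x = h x"
proof -
  interpret T: cring T by (rule T)
  define E where "E = {f \<in> PC S. g (pim S f) = h (pim S f)}"
  have sPC: "subr (PC S)" by (rule subr_PC)
  have cE: "pconst c \<in> E" for c using gh by (simp add: E_def eta_pim)
  have addE: "x + y \<in> E" if "x \<in> E" "y \<in> E" for x y
  proof -
    have xy: "x \<in> PC S" "y \<in> PC S" "g (pim S x) = h (pim S x)" "g (pim S y) = h (pim S y)"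
      using that by (auto simp: E_def)
    have "g (pim S (x + y)) = g (pim S x) \<oplus>\<^bsub>T\<^esub> g (pim S y)"
      using xy pim_add[of x S y] ring_hom_add[OF g] pim_PC[of _ S] by simp
    moreover have "h (pim S (x + y)) = h (pim S x) \<oplus>\<^bsub>T\<^esub> h (pim S y)"
      using xy pim_add[of x S y] ring_hom_add[OF h] pim_PC[of _ S] by simp
    ultimately show ?thesis using xy subr_add[OF sPC] by (simp add: E_def)
  qed
  have mulE: "x * y \<in> E" if "x \<in> E" "y \<in> E" for x y
  proof -
    have xy: "x \<in> PC S" "y \<in> PC S" "g (pim S x) = h (pim S x)" "g (pim S y) = h (pim S y)"
      using that by (auto simp: E_def)
    have "g (pim S (x * y)) = g (pim S x) \<otimes>\<^bsub>T\<^esub> g (pim S y)"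
      using xy pim_mult[of x S y] ring_hom_mult[OF g] pim_PC[of _ S] by simp
    moreover have "h (pim S (x * y)) = h (pim S x) \<otimes>\<^bsub>T\<^esub> h (pim S y)"
      using xy pim_mult[of x S y] ring_hom_mult[OF h] pim_PC[of _ S] by simp
    ultimately show ?thesis using xy subr_mult[OF sPC] by (simp add: E_def)
  qed
  have vE: "pvar s \<in> E" if s: "s \<in> S" for s
  proof -
    let ?A = "pinv_loc S"
    let ?X = "pim S (pconst s)" and ?Y = "pim S (pvar s)"
    have pv: "pvar s \<in> PC S" using pvar_PC[OF s] .
    have XC: "?X \<in> carrier ?A" "?Y \<in> carrier ?A" using pim_PC[of _ S] pv by auto
    have r1: "?X \<otimes>\<^bsub>?A\<^esub> ?X \<otimes>\<^bsub>?A\<^esub> ?Y = ?X"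
    proof -
      have "pconst s * pconst s * pvar s - pconst s \<in> pinv_ideal S"
        using pinv_ideal_gens(2)[OF s] by (simp add: pconst_pow power2_eq_square pconst_mult)
      moreover have m: "pconst s * pconst s * pvar s \<in> PC S" using pv subr_mult[OF sPC] by simp
      ultimately have "pim S (pconst s * pconst s * pvar s) = ?X"
        using pim_eq[OF m pconst_PC] by simp
      then show ?thesis using pim_mult[of "pconst s * pconst s" S "pvar s"] pim_mult[of "pconst s" S "pconst s"]
          pv subr_mult[OF sPC] by simp
    qed
    have r2: "?X \<otimes>\<^bsub>?A\<^esub> ?Y \<otimes>\<^bsub>?A\<^esub> ?Y = ?Y"
    proof -
      have "pconst s * pvar s * pvar s - pvar s \<in> pinv_ideal S"
        using pinv_ideal_gens(1)[OF s] by (simp add: power2_eq_square mult.assoc)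
      moreover have m: "pconst s * pvar s * pvar s \<in> PC S" using pv subr_mult[OF sPC] by simp
      ultimately have "pim S (pconst s * pvar s * pvar s) = ?Y"
        using pim_eq[OF m pv] by simp
      then show ?thesis using pim_mult[of "pconst s * pvar s" S "pvar s"] pim_mult[of "pconst s" S "pvar s"]
          pv subr_mult[OF sPC] by simp
    qed
    have hm: "k (?X \<otimes>\<^bsub>?A\<^esub> ?X \<otimes>\<^bsub>?A\<^esub> ?Y) = k ?X \<otimes>\<^bsub>T\<^esub> k ?X \<otimes>\<^bsub>T\<^esub> k ?Y"
      "k (?X \<otimes>\<^bsub>?A\<^esub> ?Y \<otimes>\<^bsub>?A\<^esub> ?Y) = k ?X \<otimes>\<^bsub>T\<^esub> k ?Y \<otimes>\<^bsub>T\<^esub> k ?Y"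
      if k: "k \<in> ring_hom ?A T" for k
      using ring_hom_mult[OF k] XC cring.axioms(1)[OF cring_A] ring.ring_simprules(5) by metis+
    have G: "g ?X \<otimes>\<^bsub>T\<^esub> g ?X \<otimes>\<^bsub>T\<^esub> g ?Y = g ?X" "g ?X \<otimes>\<^bsub>T\<^esub> g ?Y \<otimes>\<^bsub>T\<^esub> g ?Y = g ?Y"
      using hm[OF g] r1 r2 by simp_all
    have H: "h ?X \<otimes>\<^bsub>T\<^esub> h ?X \<otimes>\<^bsub>T\<^esub> h ?Y = h ?X" "h ?X \<otimes>\<^bsub>T\<^esub> h ?Y \<otimes>\<^bsub>T\<^esub> h ?Y = h ?Y"
      using hm[OF h] r1 r2 by simp_all
    have gX: "g ?X = h ?X" using gh by (simp add: eta_pim)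
    have "g ?Y = h ?Y"
      using T.ptwise_inv_unique[of "g ?X" "g ?Y" "h ?Y"] G H gX
        ring_hom_closed[OF g] ring_hom_closed[OF h] XC by simp
    then show ?thesis using pv by (simp add: E_def)
  qed
  show ?thesis
  proof
    fix x assume "x \<in> carrier (pinv_loc S)"
    then obtain f where f: "f \<in> PC S" "x = pim S f" using carrier_A[of S] by blast
    have "f \<in> E" by (rule PC_induct[OF cE vE addE mulE f(1)])
    then show "g x = h x" using f by (simp add: E_def)
  qed
qed

lemma comp_lemma:
  assumes q: "q \<in> Spec (pinv_loc S)" and s: "s \<in> S"
  shows "eta S s \<in> q \<longleftrightarrow> pim S (1 - pconst s * pvar s) \<notin> q"
proof -
  let ?Q = "Qof S q" and ?e = "pconst s * pvar s"
  have Q: "tprime (PC S) ?Q" and IQ: "pinv_ideal S \<subseteq> ?Q" using Qof_tprime[OF q] by auto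
  have I: "tideal (PC S) ?Q" using Q by (simp add: tprime_def)
  have sPC: "subr (PC S)" by (rule subr_PC)
  have pv: "pvar s \<in> PC S" using pvar_PC[OF s] .
  have eC: "?e \<in> PC S" using pv subr_mult[OF sPC] by simp
  have oeC: "1 - ?e \<in> PC S" using eC subr_diff[OF sPC] subr_one[OF sPC] by blast
  have g2: "pconst (s ^ 2) * pvar s - pconst s \<in> ?Q" using pinv_ideal_gens(2)[OF s] IQ by blast
  have "pconst s \<in> ?Q \<longleftrightarrow> 1 - ?e \<notin> ?Q"
  proof
    assume a: "pconst s \<in> ?Q"
    then have eQ: "?e \<in> ?Q" using tideal_rmult[OF I a pv] by simp
    show "1 - ?e \<notin> ?Q"
    proof
      assume "1 - ?e \<in> ?Q"
      then have "(1 - ?e) + ?e \<in> ?Q" using tideal_add[OF I _ eQ] by blast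
      then show False using Q by (simp add: tprime_def)
    qed
  next
    assume a: "1 - ?e \<notin> ?Q"
    have "pvar s * (pconst (s ^ 2) * pvar s - pconst s) \<in> ?Q" using tideal_lmult[OF I pv g2] .
    then have "- (pvar s * (pconst (s ^ 2) * pvar s - pconst s)) \<in> ?Q" using tideal_neg[OF sPC I] by blast
    moreover have "- (pvar s * (pconst (s ^ 2) * pvar s - pconst s)) = ?e * (1 - ?e)"
      by (simp add: pconst_pow power2_eq_square pconst_mult algebra_simps)
    ultimately have "?e * (1 - ?e) \<in> ?Q" by simp
    then have eQ: "?e \<in> ?Q" using Q eC oeC a unfolding tprime_def by blast
    have "pconst s * ?e \<in> ?Q" using tideal_lmult[OF I _ eQ] by simp
    moreover have "pconst s * ?e = pconst (s ^ 2) * pvar s" by (simp add: pconst_pow power2_eq_square pconst_mult mult.assoc)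
    ultimately have "pconst (s ^ 2) * pvar s - (pconst (s ^ 2) * pvar s - pconst s) \<in> ?Q"
      using g2 tideal_diff[OF sPC I] by metis
    then show "pconst s \<in> ?Q" by simp
  qed
  then show ?thesis using oeC by (simp add: Qof_def eta_pim)
qed

lemma clopen_main:
  assumes s: "s \<in> S"
  defines "E \<equiv> {q \<in> Spec (pinv_loc S). eta S -` q \<in> Vset (tc_ring :: 'a::comm_ring_1 ring) {s}}"
  shows "closedin (zariski (pinv_loc S)) E \<and> openin (zariski (pinv_loc S)) E
    \<and> closedin (flat_top (pinv_loc S)) E \<and> openin (flat_top (pinv_loc S)) E"
proof (rule clopen_gen[OF cring_A])
  show "eta S s \<in> carrier (pinv_loc S)" unfolding eta_pim by (rule pim_PC) simp
  show "pim S (1 - pconst s * pvar s) \<in> carrier (pinv_loc S)"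
    using pvar_PC[OF s] subr_PC[of S] by (intro pim_PC[of _ S] subr_diff subr_mult subr_one) auto
  show "\<And>q. q \<in> Spec (pinv_loc S) \<Longrightarrow> eta S s \<in> q \<longleftrightarrow> pim S (1 - pconst s * pvar s) \<notin> q"
    using comp_lemma s by blast
  show "E = {q \<in> Spec (pinv_loc S). eta S s \<in> q}"
    unfolding E_def using contr_Spec[of _ S] by (auto simp: Vset_def)
qed

lemma nonzero_iff:
  fixes S :: "'a::comm_ring_1 set"
  shows "(\<zero>\<^bsub>pinv_loc S\<^esub> \<noteq> \<one>\<^bsub>pinv_loc S\<^esub>) \<longleftrightarrow> ((0::'a) \<noteq> 1)"
proof
  assume a: "\<zero>\<^bsub>pinv_loc S\<^esub> \<noteq> \<one>\<^bsub>pinv_loc S\<^esub>"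
  show "(0::'a) \<noteq> 1"
  proof
    assume "(0::'a) = 1"
    then have "(1 :: ('a \<Rightarrow>\<^sub>0 nat) \<Rightarrow>\<^sub>0 'a) = 0"
      by (metis pconst_0 pconst_1)
    then show False using a by (simp add: zero_A one_A pim_zero)
  qed
next
  assume a: "(0::'a) \<noteq> 1"
  have "\<forall>n. (1::'a) ^ n \<noteq> 0" using a by simp
  then obtain p :: "'a set" where p: "tprime UNIV p" using exists_prime_avoiding[of "1::'a"] by blast
  have "(1 :: ('a \<Rightarrow>\<^sub>0 nat) \<Rightarrow>\<^sub>0 'a) \<notin> Zset S p" using Z_one[OF p] by (simp add: Zset_def)
  then have "(1 :: ('a \<Rightarrow>\<^sub>0 nat) \<Rightarrow>\<^sub>0 'a) \<notin> pinv_ideal S" using pinv_ideal_sub_Zset[OF p] by blast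
  then have "pim S 1 \<noteq> pinv_ideal S" using pim_eq_zero[of 1 S] subr_one[OF subr_PC[of S]] by simp
  then show "\<zero>\<^bsub>pinv_loc S\<^esub> \<noteq> \<one>\<^bsub>pinv_loc S\<^esub>" by (simp add: zero_A one_A)
qed

lemma kernel_nil: "{r. eta S r = \<zero>\<^bsub>pinv_loc S\<^esub>} \<subseteq> {r::'a::comm_ring_1. \<exists>n. r ^ n = 0}"
proof
  fix r :: 'a assume "r \<in> {r. eta S r = \<zero>\<^bsub>pinv_loc S\<^esub>}"
  then have "pim S (pconst r) = pinv_ideal S" by (simp add: eta_pim zero_A)
  then have rI: "pconst r \<in> pinv_ideal S" using pim_eq_zero[of "pconst r" S] by simp
  show "r \<in> {r. \<exists>n. r ^ n = 0}"
  proof (rule ccontr)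
    assume "r \<notin> {r. \<exists>n. r ^ n = 0}"
    then have "\<forall>n. r ^ n \<noteq> 0" by simp
    then obtain p where p: "tprime UNIV p" "r \<notin> p" using exists_prime_avoiding[of r] by blast
    have "pconst r \<in> Zset S p" using rI pinv_ideal_sub_Zset[OF p(1)] by blast
    then have "r \<in> p" using Z_pconst[OF p(1)] by (simp add: Zset_def)
    then show False using p by simp
  qed
qed

theorem proposition3p5:
  fixes S :: "'a::comm_ring_1 set"
  shows
    "eta S \<in> ring_hom tc_ring (pinv_loc S)
     \<and> (\<forall>(T :: 'c ring) g h. cring T \<and> g \<in> ring_hom (pinv_loc S) T \<and> h \<in> ring_hom (pinv_loc S) T
            \<and> (\<forall>r. g (eta S r) = h (eta S r))
          \<longrightarrow> (\<forall>x\<in>carrier (pinv_loc S). g x = h x))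
     \<and> bij_betw (\<lambda>q. eta S -` q) (Spec (pinv_loc S)) (Spec (tc_ring :: 'a ring))
     \<and> (\<forall>s\<in>S. closedin (zariski (pinv_loc S))
                 {q \<in> Spec (pinv_loc S). eta S -` q \<in> Vset (tc_ring :: 'a ring) {s}}
             \<and> openin (zariski (pinv_loc S))
                 {q \<in> Spec (pinv_loc S). eta S -` q \<in> Vset (tc_ring :: 'a ring) {s}}
             \<and> closedin (flat_top (pinv_loc S))
                 {q \<in> Spec (pinv_loc S). eta S -` q \<in> Vset (tc_ring :: 'a ring) {s}}
             \<and> openin (flat_top (pinv_loc S))
                 {q \<in> Spec (pinv_loc S). eta S -` q \<in> Vset (tc_ring :: 'a ring) {s}})
     \<and> (\<zero>\<^bsub>pinv_loc S\<^esub> \<noteq> \<one>\<^bsub>pinv_loc S\<^esub> \<longleftrightarrow> (0::'a) \<noteq> 1)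
     \<and> {r. eta S r = \<zero>\<^bsub>pinv_loc S\<^esub>} \<subseteq> {r::'a. \<exists>n. r ^ n = 0}"
proof (intro conjI allI impI ballI)
  show "eta S \<in> ring_hom tc_ring (pinv_loc S)" by (rule eta_hom)
next
  fix T :: "'c ring" and g h x
  assume a: "cring T \<and> g \<in> ring_hom (pinv_loc S) T \<and> h \<in> ring_hom (pinv_loc S) T \<and> (\<forall>r. g (eta S r) = h (eta S r))"
    and x: "x \<in> carrier (pinv_loc S)"
  then show "g x = h x" using epi[of T g S h] by blast
next
  show "bij_betw (\<lambda>q. eta S -` q) (Spec (pinv_loc S)) (Spec (tc_ring :: 'a ring))"
    unfolding bij_betw_def
  proof
    show "inj_on (\<lambda>q. eta S -` q) (Spec (pinv_loc S))"
      by (rule inj_onI) (rule eta_inj)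
    show "(\<lambda>q. eta S -` q) ` Spec (pinv_loc S) = Spec (tc_ring :: 'a ring)"
      using contr_Spec[of _ S] eta_surj[of _ S] by blast
  qed
next
  fix s assume s: "s \<in> S"
  note C = clopen_main[OF s]
  show "closedin (zariski (pinv_loc S)) {q \<in> Spec (pinv_loc S). eta S -` q \<in> Vset (tc_ring :: 'a ring) {s}}"
    using C by blast
  show "openin (zariski (pinv_loc S)) {q \<in> Spec (pinv_loc S). eta S -` q \<in> Vset (tc_ring :: 'a ring) {s}}"
    using C by blast
  show "closedin (flat_top (pinv_loc S)) {q \<in> Spec (pinv_loc S). eta S -` q \<in> Vset (tc_ring :: 'a ring) {s}}"
    using C by blast
  show "openin (flat_top (pinv_loc S)) {q \<in> Spec (pinv_loc S). eta S -` q \<in> Vset (tc_ring :: 'a ring) {s}}"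
    using C by blast
next
  show "(\<zero>\<^bsub>pinv_loc S\<^esub> \<noteq> \<one>\<^bsub>pinv_loc S\<^esub>) \<longleftrightarrow> ((0::'a) \<noteq> 1)" by (rule nonzero_iff)
next
  show "{r. eta S r = \<zero>\<^bsub>pinv_loc S\<^esub>} \<subseteq> {r::'a. \<exists>n. r ^ n = 0}" by (rule kernel_nil)
qed


end
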